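(* Let $\mathbf b=(b_1,b_2)\in\mathbb N^2$ with $\gcd(b_1,b_2)=1$ and $b_1\le b_2$, let $r\ge1$ and $\boldsymbol\alpha=(\alpha_1,\dots,\alpha_r)\in(0,1)^r$. With $\overline R(n)$ as below, for every $\varepsilon>0$, $$\mathbb V\big(\overline R(n)\big)=O\big(n^{-1/2+\varepsilon}\big),$$ the implied constant depending on $\boldsymbol\alpha,\mathbf b,r,\varepsilon$.
   Context: $\mathbf b$-visibility: given two distinct lattice points $P=(p_1,p_2)$, $Q=(q_1,q_2)\in\mathbb Z^2$, they determine a curve through both of the form $a_1(y-q_2)^{b_1}=a_2(x-q_1)^{b_2}$ for some $(a_1,a_2)\in\mathbb Q^2\setminus\{(0,0)\}$; $P$ is $\mathbf b$-visible from $Q$ if no other lattice point lies on the segment of this curve between $P$ and $Q$; a point $P\ne(0,0)$ is $\mathbf b$-visible if it is $\mathbf b$-visible from the origin. For $1\le j\le r$, $(P^{(j)}_i)_{i\ge0}$ is an $\alpha_j$-random walk ($P^{(j)}_0=(0,0)$, $P^{(j)}_{i+1}=P^{(j)}_i+(1,0)$ with probability $\alpha_j$ and $+(0,1)$ with probability $1-\alpha_j$, independently), the $r$ walks being mutually independent. $Y_i=1$ if all $P^{(j)}_i$, $1\le j\le r$, are $\mathbf b$-visible, $Y_i=0$ otherwise; $\overline R(n)=\frac1n\sum_{i=1}^nY_i$. *)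

theory Defs
  imports "HOL-Probability.Probability" "HOL-Library.Landau_Symbols"
begin

definition on_b_curve :: "nat \<times> nat \<Rightarrow> rat \<times> rat \<Rightarrow> int \<times> int \<Rightarrow> bool" where
  "on_b_curve b a X \<longleftrightarrow>
     fst a * of_int (snd X) ^ fst b = snd a * of_int (fst X) ^ snd b"

definition betw :: "int \<Rightarrow> int \<Rightarrow> int \<Rightarrow> bool" where
  "betw u v x \<longleftrightarrow> min u v \<le> x \<and> x \<le> max u v"

definition b_visible :: "nat \<times> nat \<Rightarrow> int \<times> int \<Rightarrow> bool" where
  "b_visible b P \<longleftrightarrow> P \<noteq> (0,0) \<and>
     (\<forall>a::rat \<times> rat. a \<noteq> (0,0) \<and> on_b_curve b a P \<longrightarrow>
        (\<forall>X::int \<times> int. on_b_curve b a X \<and> betw 0 (fst P) (fst X) \<and> betw 0 (snd P) (snd X)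
            \<longrightarrow> X = (0,0) \<or> X = P))"

text \<open>Probability space of the steps: omega (j,i) = True means the i-th step
  (i = 0,1,...) of walk j is (1,0), which has probability alpha j; otherwise (0,1).
  All steps are independent.\<close>
definition walk_space :: "nat \<Rightarrow> (nat \<Rightarrow> real) \<Rightarrow> (nat \<times> nat \<Rightarrow> bool) measure" where
  "walk_space r \<alpha> = (\<Pi>\<^sub>M ji\<in>{1..r} \<times> UNIV. measure_pmf (bernoulli_pmf (\<alpha> (fst ji))))"

definition walk_pos :: "(nat \<times> nat \<Rightarrow> bool) \<Rightarrow> nat \<Rightarrow> nat \<Rightarrow> int \<times> int" where
  "walk_pos \<omega> j i =
     (int (card {k. k < i \<and> \<omega> (j,k)}), int (card {k. k < i \<and> \<not> \<omega> (j,k)}))"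

definition Y_ind :: "nat \<times> nat \<Rightarrow> nat \<Rightarrow> nat \<Rightarrow> (nat \<times> nat \<Rightarrow> bool) \<Rightarrow> real" where
  "Y_ind b r i \<omega> = (if \<forall>j\<in>{1..r}. b_visible b (walk_pos \<omega> j i) then 1 else 0)"

definition Rbar :: "nat \<times> nat \<Rightarrow> nat \<Rightarrow> nat \<Rightarrow> (nat \<times> nat \<Rightarrow> bool) \<Rightarrow> real" where
  "Rbar b r n \<omega> = (1 / real n) * (\<Sum>i=1..n. Y_ind b r i \<omega>)"

end

theory Submission
  imports Defs "HOL-Computational_Algebra.Primes"
begin

lemma nat_curve_pts:
  fixes b1 b2 x y x' y' :: nat
  assumes b1: "b1 \<ge> 1" and b2: "b2 \<ge> 1" and g: "coprime b1 b2"
    and xy: "x \<ge> 1" "y \<ge> 1" and le: "x' \<le> x" "y' \<le> y"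
    and eq: "y' ^ b1 * x ^ b2 = x' ^ b2 * y ^ b1"
    and noq: "\<not>(\<exists>q. prime q \<and> q^b1 dvd x \<and> q^b2 dvd y)"
  shows "(x' = 0 \<and> y' = 0) \<or> (x' = x \<and> y' = y)"
proof (cases "x' = 0")
  case True
  then have "y' ^ b1 * x ^ b2 = 0" using eq b2 by simp
  then have "y' = 0" using xy b1 by simp
  then show ?thesis using True by simp
next
  case False
  have y'0: "y' \<noteq> 0"
  proof
    assume "y' = 0"
    then have "x' ^ b2 * y ^ b1 = 0" using eq b1 by (cases b1) auto
    then show False using False xy by simp
  qed
  show ?thesis
  proof (cases "\<forall>p. prime p \<longrightarrow> multiplicity p x \<le> multiplicity p x'")
    case True
    then have "x dvd x'" using xy by (intro multiplicity_le_imp_dvd) auto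
    then have "x \<le> x'" using False by (simp add: dvd_imp_le)
    then have xx: "x' = x" using le by simp
    then have "y' ^ b1 = y ^ b1" using eq xy by simp
    then have "y' = y" using b1 by (simp add: power_eq_iff_eq_base)
    then show ?thesis using xx by simp
  next
    case False2: False
    then obtain p where p: "prime p" "multiplicity p x' < multiplicity p x" by auto
    have "multiplicity p (y' ^ b1 * x ^ b2) = multiplicity p (x' ^ b2 * y ^ b1)" using eq by simp
    then have M: "b1 * multiplicity p y' + b2 * multiplicity p x = b2 * multiplicity p x' + b1 * multiplicity p y"
      using p(1) False y'0 xy
      by (simp add: prime_elem_multiplicity_mult_distrib prime_elem_multiplicity_power_distrib)
    define e where "e = multiplicity p x - multiplicity p x'"
    have e0: "e > 0" using p(2) e_def by simp
    have "b1 * multiplicity p y = b1 * multiplicity p y' + b2 * e" using M p(2) e_def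
      by (simp add: diff_mult_distrib2)
    then have f: "b1 * (multiplicity p y - multiplicity p y') = b2 * e"
      by (simp add: diff_mult_distrib2)
    then have "b1 dvd b2 * e" by (metis dvd_triv_left)
    then have "b1 dvd e" using g by (simp add: coprime_dvd_mult_right_iff)
    then have "b1 \<le> e" using e0 by (simp add: dvd_imp_le)
    then have m1: "b1 \<le> multiplicity p x" using e_def by simp
    have "b1 * b2 \<le> b1 * (multiplicity p y - multiplicity p y')" using f \<open>b1 \<le> e\<close>
      by (metis mult.commute mult_le_mono2)
    then have "b2 \<le> multiplicity p y - multiplicity p y'" using b1 by simp
    then have m2: "b2 \<le> multiplicity p y" by simp
    have "p ^ b1 dvd x" "p ^ b2 dvd y" using m1 m2 by (auto intro: multiplicity_dvd')
    then show ?thesis using noq p(1) by blast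
  qed
qed

lemma vis_char:
  fixes b1 b2 x y :: nat
  assumes b1: "b1 \<ge> 1" and b2: "b2 \<ge> 1" and g: "coprime b1 b2"
    and xy: "x \<ge> 1" "y \<ge> 1"
  shows "b_visible (b1,b2) (int x, int y) \<longleftrightarrow> \<not>(\<exists>q. prime q \<and> q^b1 dvd x \<and> q^b2 dvd y)"
proof
  assume vis: "b_visible (b1,b2) (int x, int y)"
  show "\<not>(\<exists>q. prime q \<and> q^b1 dvd x \<and> q^b2 dvd y)"
  proof
    assume "\<exists>q. prime q \<and> q^b1 dvd x \<and> q^b2 dvd y"
    then obtain q u v where q: "prime q" and u: "x = q^b1 * u" and v: "y = q^b2 * v" by (auto elim!: dvdE)
    have "q ^ 1 \<le> q ^ b1" using q b1 prime_gt_0_nat[OF q] by (intro power_increasing) auto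
    then have q2: "q ^ b1 \<ge> 2" using prime_ge_2_nat[OF q] by simp
    have u1: "u \<ge> 1" using u xy by (cases u) auto
    have "2 * u \<le> q ^ b1 * u" by (rule mult_le_mono1[OF q2])
    then have ux: "u < x" using u u1 by linarith
    have xb: "x ^ b2 = q ^ (b1*b2) * u ^ b2" unfolding u by (simp add: power_mult_distrib power_mult)
    have yb: "y ^ b1 = q ^ (b1*b2) * v ^ b1" unfolding v by (simp add: power_mult_distrib power_mult[symmetric] mult.commute)
    have nat_eq: "x ^ b2 * v ^ b1 = y ^ b1 * u ^ b2" unfolding xb yb by simp
    define a :: "rat \<times> rat" where "a = (of_nat x ^ b2, of_nat y ^ b1)"
    have a0: "a \<noteq> (0,0)" using xy by (simp add: a_def)
    have cP: "on_b_curve (b1,b2) a (int x, int y)" by (simp add: on_b_curve_def a_def)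
    have cX: "on_b_curve (b1,b2) a (int u, int v)"
      unfolding on_b_curve_def a_def using arg_cong[OF nat_eq, of "of_nat :: nat \<Rightarrow> rat"]
      by simp
    have vv: "\<forall>a::rat \<times> rat. a \<noteq> (0,0) \<and> on_b_curve (b1,b2) a (int x, int y) \<longrightarrow>
        (\<forall>X::int \<times> int. on_b_curve (b1,b2) a X \<and> betw 0 (int x) (fst X) \<and> betw 0 (int y) (snd X)
            \<longrightarrow> X = (0,0) \<or> X = (int x, int y))" using vis unfolding b_visible_def by simp
    have q1: "1 \<le> q^b2" using prime_gt_0_nat[OF q] by simp
    have "u \<le> x" using ux by simp
    have "v \<le> y" unfolding v using mult_le_mono1[OF q1, of v] by simp
    have bt: "betw 0 (int x) (int u)" "betw 0 (int y) (int v)"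
      using \<open>u \<le> x\<close> \<open>v \<le> y\<close> by (auto simp: betw_def)
    have "(int u, int v) = (0,0) \<or> (int u, int v) = (int x, int y)"
      using vv[rule_format, OF conjI[OF a0 cP], of "(int u, int v)"] cX bt by simp
    then show False using u1 ux by auto
  qed
next
  assume noq: "\<not>(\<exists>q. prime q \<and> q^b1 dvd x \<and> q^b2 dvd y)"
  show "b_visible (b1,b2) (int x, int y)"
    unfolding b_visible_def
  proof (intro conjI allI impI)
    show "(int x, int y) \<noteq> (0,0)" using xy by simp
    fix a :: "rat \<times> rat" and X :: "int \<times> int"
    assume A: "a \<noteq> (0,0) \<and> on_b_curve (b1,b2) a (int x, int y)"
    assume B: "on_b_curve (b1,b2) a X \<and> betw 0 (fst (int x, int y)) (fst X) \<and> betw 0 (snd (int x, int y)) (snd X)"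
    obtain a1 a2 where a: "a = (a1,a2)" by (cases a)
    obtain X1 X2 where X: "X = (X1,X2)" by (cases X)
    have r: "0 \<le> X1" "X1 \<le> int x" "0 \<le> X2" "X2 \<le> int y" using B X by (auto simp: betw_def)
    obtain x' y' where x': "X1 = int x'" and y': "X2 = int y'" using r by (metis nonneg_int_cases)
    have e1: "a1 * of_nat y ^ b1 = a2 * of_nat x ^ b2" using A a by (simp add: on_b_curve_def)
    have e2: "a1 * of_nat y' ^ b1 = a2 * of_nat x' ^ b2" using B a X x' y' by (simp add: on_b_curve_def)
    have a10: "a1 \<noteq> 0"
    proof
      assume "a1 = 0"
      then have "a2 * of_nat x ^ b2 = 0" using e1 by simp
      then have "a2 = 0" using xy by simp
      then show False using A a \<open>a1 = 0\<close> by simp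
    qed
    have "a1 * (of_nat y' ^ b1 * of_nat x ^ b2) = a1 * (of_nat x' ^ b2 * of_nat y ^ b1)"
      using e1 e2 by (metis mult.assoc mult.commute)
    then have "(of_nat (y' ^ b1 * x ^ b2) :: rat) = of_nat (x' ^ b2 * y ^ b1)" using a10 by simp
    then have eq: "y' ^ b1 * x ^ b2 = x' ^ b2 * y ^ b1" by (simp only: of_nat_eq_iff)
    have "(x' = 0 \<and> y' = 0) \<or> (x' = x \<and> y' = y)"
      by (rule nat_curve_pts[OF b1 b2 g xy _ _ eq noq]) (use r x' y' in auto)
    then show "X = (0,0) \<or> X = (int x, int y)" using X x' y' by auto
  qed
qed


definition Sset :: "nat \<Rightarrow> nat \<Rightarrow> nat set" where
  "Sset b1 k = {q. prime q \<and> q ^ b1 dvd k}"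

lemma Sset_finite: "k \<ge> 1 \<Longrightarrow> b1 \<ge> 1 \<Longrightarrow> finite (Sset b1 k)"
proof -
  assume k: "k \<ge> 1" and b: "b1 \<ge> 1"
  have "Sset b1 k \<subseteq> {..k}"
  proof
    fix q assume "q \<in> Sset b1 k"
    then have "prime q" "q ^ b1 dvd k" by (auto simp: Sset_def)
    then have "q dvd k" using b by (intro dvd_trans[OF dvd_power[of b1 q]]) auto
    then show "q \<in> {..k}" using k by (auto dest: dvd_imp_le)
  qed
  then show ?thesis by (rule finite_subset) simp
qed

lemma Sset_sub: "k \<ge> 1 \<Longrightarrow> b1 \<ge> 1 \<Longrightarrow> Sset b1 k \<subseteq> prime_factors k"
proof
  fix q assume k: "k \<ge> 1" and b: "b1 \<ge> 1" and "q \<in> Sset b1 k"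
  then have "prime q" "q ^ b1 dvd k" by (auto simp: Sset_def)
  then have "q dvd k" using b by (intro dvd_trans[OF dvd_power[of b1 q]]) auto
  then show "q \<in> prime_factors k" using k \<open>prime q\<close> by (auto simp: prime_factors_dvd)
qed

lemma prod_prime_pow_dvd:
  fixes T :: "nat set"
  assumes "finite T" "\<forall>q\<in>T. prime q"
  shows "(\<forall>q\<in>T. q ^ e dvd y) \<longleftrightarrow> (\<Prod>q\<in>T. q ^ e) dvd y"
  using assms
proof (induction T rule: finite_induct)
  case empty then show ?case by simp
next
  case (insert q T)
  have cop: "coprime (q ^ e) (\<Prod>q\<in>T. q ^ e)"
  proof (intro prod_coprime_right coprime_power_left_iff[THEN iffD2] coprime_power_right_iff[THEN iffD2] disjI1)
    fix q' assume "q' \<in> T"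
    then show "coprime q q'" using insert by (intro primes_coprime) auto
  qed
  show ?case
  proof
    assume "\<forall>q\<in>insert q T. q ^ e dvd y"
    then have "q ^ e dvd y" "(\<Prod>q\<in>T. q ^ e) dvd y" using insert by auto
    then show "(\<Prod>q\<in>insert q T. q ^ e) dvd y" using insert cop by (simp add: divides_mult)
  next
    assume "(\<Prod>q\<in>insert q T. q ^ e) dvd y"
    then have "q ^ e * (\<Prod>q\<in>T. q ^ e) dvd y" using insert by simp
    then have "q ^ e dvd y" "(\<Prod>q\<in>T. q ^ e) dvd y"
      using dvd_mult_left dvd_mult_right by blast+
    then show "\<forall>q\<in>insert q T. q ^ e dvd y" using insert by simp
  qed
qed

lemma incl_excl:
  fixes S :: "nat set"
  assumes "finite S" "\<forall>q\<in>S. prime q"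
  shows "(if \<forall>q\<in>S. \<not> q ^ e dvd y then 1 else 0 :: real) =
         (\<Sum>T\<in>Pow S. (-1) ^ card T * (if (\<Prod>q\<in>T. q ^ e) dvd y then 1 else 0))"
proof -
  define ind where "ind q = (if q ^ e dvd y then 1 else 0 :: real)" for q
  have "(if \<forall>q\<in>S. \<not> q ^ e dvd y then 1 else 0 :: real) = (\<Prod>q\<in>S. - ind q + 1)"
    using assms(1) by (induction S rule: finite_induct) (auto simp: ind_def)
  also have "\<dots> = (\<Sum>T\<in>Pow S. (\<Prod>q\<in>T. - ind q) * (\<Prod>q\<in>S-T. 1))"
    by (rule prod_add[OF assms(1)])
  also have "\<dots> = (\<Sum>T\<in>Pow S. (-1) ^ card T * (if (\<Prod>q\<in>T. q ^ e) dvd y then 1 else 0))"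
  proof (rule sum.cong[OF refl])
    fix T assume T: "T \<in> Pow S"
    then have fT: "finite T" using assms(1) finite_subset by auto
    have pT: "\<forall>q\<in>T. prime q" using T assms(2) by auto
    have "(\<Prod>q\<in>T. - ind q) = (-1) ^ card T * (\<Prod>q\<in>T. ind q)"
      using fT by (induction T rule: finite_induct) auto
    also have "(\<Prod>q\<in>T. ind q) = (if \<forall>q\<in>T. q ^ e dvd y then 1 else 0)"
      using fT by (induction T rule: finite_induct) (auto simp: ind_def)
    also have "\<dots> = (if (\<Prod>q\<in>T. q ^ e) dvd y then 1 else 0)"
      using prod_prime_pow_dvd[OF fT pT] by simp
    finally show "(\<Prod>q\<in>T. - ind q) * (\<Prod>q\<in>S-T. 1) = (-1) ^ card T * (if (\<Prod>q\<in>T. q ^ e) dvd y then 1 else 0)"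
      by simp
  qed
  finally show ?thesis .
qed

lemma vis_line:
  fixes b1 b2 k x :: nat
  assumes b1: "b1 \<ge> 1" and b12: "b1 \<le> b2" and g: "coprime b1 b2"
    and x: "1 \<le> x" "x < k"
  shows "b_visible (b1,b2) (int x, int (k - x)) \<longleftrightarrow> (\<forall>q\<in>Sset b1 k. \<not> q ^ b2 dvd (k - x))"
proof -
  have "b_visible (b1,b2) (int x, int (k - x)) \<longleftrightarrow> \<not>(\<exists>q. prime q \<and> q^b1 dvd x \<and> q^b2 dvd (k - x))"
    using x b1 b12 g by (intro vis_char) auto
  also have "\<dots> \<longleftrightarrow> (\<forall>q\<in>Sset b1 k. \<not> q ^ b2 dvd (k - x))"
  proof -
    have "(prime q \<and> q^b1 dvd x \<and> q^b2 dvd (k - x)) \<longleftrightarrow> (q \<in> Sset b1 k \<and> q ^ b2 dvd (k - x))" for q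
    proof -
      have pd: "q ^ b1 dvd q ^ b2" using b12 by (simp add: le_imp_power_dvd)
      have kx: "k = x + (k - x)" using x by simp
      show ?thesis
      proof
        assume A: "prime q \<and> q^b1 dvd x \<and> q^b2 dvd (k - x)"
        then have "q ^ b1 dvd (k - x)" using pd dvd_trans by blast
        then have "q ^ b1 dvd x + (k - x)" using A by (intro dvd_add) auto
        then have "q ^ b1 dvd k" using kx by simp
        then show "q \<in> Sset b1 k \<and> q ^ b2 dvd (k - x)" using A by (simp add: Sset_def)
      next
        assume A: "q \<in> Sset b1 k \<and> q ^ b2 dvd (k - x)"
        then have "q ^ b1 dvd (k - x)" "q ^ b1 dvd k" "prime q" using pd dvd_trans by (auto simp: Sset_def)
        then have "q ^ b1 dvd x + (k - x)" using kx by simp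
        then have "q ^ b1 dvd x" using \<open>q ^ b1 dvd (k - x)\<close> by (simp add: dvd_add_left_iff)
        then show "prime q \<and> q^b1 dvd x \<and> q^b2 dvd (k - x)" using A \<open>prime q\<close> by simp
      qed
    qed
    then show ?thesis by blast
  qed
  finally show ?thesis .
qed


lemma prod_pf_le:
  fixes k :: nat assumes k: "k \<ge> 1"
  shows "(\<Prod>q\<in>prime_factors k. q) \<le> k"
proof -
  have "(\<Prod>q\<in>prime_factors k. q) \<le> (\<Prod>q\<in>prime_factors k. q ^ multiplicity q k)"
  proof (rule prod_mono)
    fix q assume q: "q \<in> prime_factors k"
    then have "multiplicity q k > 0" by (simp add: prime_factors_multiplicity)
    moreover have "q > 0" using q by (rule prime_factors_gt_0_nat)
    ultimately show "0 \<le> q \<and> q \<le> q ^ multiplicity q k"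
      by (simp add: self_le_power)
  qed
  also have "\<dots> = k" using k prod_prime_factors[of k] by simp
  finally show ?thesis .
qed

lemma card_pf_bound:
  fixes \<epsilon> :: real assumes e: "\<epsilon> > 0"
  shows "\<exists>C>0. \<forall>k::nat. k \<ge> 1 \<longrightarrow> (2::real) ^ card (prime_factors k) \<le> C * real k powr \<epsilon>"
proof -
  define B :: real where "B = 2 powr (1 / \<epsilon>)"
  define N where "N = nat \<lceil>B\<rceil>"
  define C :: real where "C = 2 ^ N"
  have B0: "B > 0" unfolding B_def by simp
  have Be: "B powr \<epsilon> = 2" unfolding B_def using e by (simp add: powr_powr)
  show ?thesis
  proof (intro exI[of _ C] conjI allI impI)
    show "C > 0" unfolding C_def by simp
    fix k :: nat assume k: "k \<ge> 1"
    define P where "P = prime_factors k"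
    define Ps where "Ps = {q\<in>P. real q < B}"
    define Pl where "Pl = P - Ps"
    have fP: "finite P" unfolding P_def by simp
    have PsP: "Ps \<subseteq> P" unfolding Ps_def by auto
    have fPs: "finite Ps" using fP PsP finite_subset by auto
    have cPs: "card Ps \<le> N"
    proof -
      have "Ps \<subseteq> {..<N}"
      proof
        fix q assume "q \<in> Ps"
        then have "real q < B" unfolding Ps_def by simp
        then have "real q < real_of_int \<lceil>B\<rceil>" by linarith
        then have "int q < \<lceil>B\<rceil>" by linarith
        then show "q \<in> {..<N}" unfolding N_def by simp
      qed
      then have "card Ps \<le> card {..<N}" by (intro card_mono) auto
      then show ?thesis by simp
    qed
    have split: "card P = card Ps + card Pl"
      unfolding Pl_def using fP PsP fPs by (metis card_Diff_subset card_mono le_add_diff_inverse)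
    have l1: "(2::real) ^ card Ps \<le> C" unfolding C_def using cPs by (intro power_increasing) auto
    have l2: "(2::real) ^ card Pl \<le> real k powr \<epsilon>"
    proof -
      have fPl: "finite Pl" unfolding Pl_def using fP by simp
      have "(2::real) ^ card Pl = (\<Prod>q\<in>Pl. 2)" by simp
      also have "\<dots> \<le> (\<Prod>q\<in>Pl. real q powr \<epsilon>)"
      proof (rule prod_mono)
        fix q assume "q \<in> Pl"
        then have "B \<le> real q" unfolding Pl_def Ps_def by auto
        then have "B powr \<epsilon> \<le> real q powr \<epsilon>" using e B0 by (intro powr_mono2) auto
        then show "0 \<le> (2::real) \<and> 2 \<le> real q powr \<epsilon>" using Be by simp
      qed
      also have "\<dots> = (\<Prod>q\<in>Pl. real q) powr \<epsilon>" by (simp add: prod_powr_distrib)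
      also have "\<dots> \<le> real k powr \<epsilon>"
      proof (rule powr_mono2)
        show "0 \<le> \<epsilon>" using e by simp
        show "0 \<le> (\<Prod>q\<in>Pl. real q)" by (simp add: prod_nonneg)
        have "(\<Prod>q\<in>Pl. q) \<le> (\<Prod>q\<in>P. q)"
        proof -
          have "(\<Prod>q\<in>P. q) = (\<Prod>q\<in>P - Pl. q) * (\<Prod>q\<in>Pl. q)"
            using fP unfolding Pl_def by (intro prod.subset_diff) auto
          moreover have "(\<Prod>q\<in>P - Pl. q) \<ge> 1"
          proof -
            have "(\<Prod>q\<in>P - Pl. q) > 0" using prime_factors_gt_0_nat unfolding P_def by (intro prod_pos) auto
            then show ?thesis by simp
          qed
          ultimately show ?thesis by simp
        qed
        also have "\<dots> \<le> k" unfolding P_def by (rule prod_pf_le[OF k])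
        finally show "(\<Prod>q\<in>Pl. real q) \<le> real k" by (simp flip: of_nat_prod)
      qed
      finally show ?thesis .
    qed
    have "(2::real) ^ card (prime_factors k) = 2 ^ card Ps * 2 ^ card Pl" unfolding P_def[symmetric] split
      by (simp add: power_add)
    also have "\<dots> \<le> C * real k powr \<epsilon>" using l1 l2 by (intro mult_mono) (auto simp: C_def)
    finally show "(2::real) ^ card (prime_factors k) \<le> C * real k powr \<epsilon>" .
  qed
qed


definition w :: "nat \<Rightarrow> real \<Rightarrow> nat \<Rightarrow> real" where
  "w m a j = real (m choose j) * a ^ j * (1 - a) ^ (m - j)"

lemma w_nonneg: "0 \<le> a \<Longrightarrow> a \<le> 1 \<Longrightarrow> 0 \<le> w m a j"
  by (simp add: w_def)

lemma w_big: "m < j \<Longrightarrow> w m a j = 0"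
  by (simp add: w_def)

lemma w_sum: "(\<Sum>j\<le>m. w m a j) = 1"
proof -
  have "(a + (1 - a)) ^ m = (\<Sum>j\<le>m. of_nat (m choose j) * a ^ j * (1 - a) ^ (m - j))"
    by (rule binomial_ring)
  then show ?thesis by (simp add: w_def)
qed

lemma w_le1: "0 \<le> a \<Longrightarrow> a \<le> 1 \<Longrightarrow> w m a j \<le> 1"
proof (cases "j \<le> m")
  case True
  assume a: "0 \<le> a" "a \<le> 1"
  have "w m a j \<le> (\<Sum>j\<le>m. w m a j)"
    using True a by (intro member_le_sum) (auto simp: w_nonneg)
  then show ?thesis by (simp add: w_sum)
qed (simp add: w_big)

lemma w_ratio:
  assumes "j < m"
  shows "w m a (Suc j) * ((1 - a) * (real j + 1)) = w m a j * (a * (real m - real j))"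
proof -
  have c: "real (m choose Suc j) * (real j + 1) = real (m choose j) * (real m - real j)"
  proof -
    have "Suc j * (m choose Suc j) = m * ((m - 1) choose (Suc j - 1))"
      by (rule times_binomial_minus1_eq) simp
    moreover have "(m - j) * (m choose j) = m * ((m - 1) choose j)" by (rule binomial_absorb_comp)
    ultimately have "Suc j * (m choose Suc j) = (m - j) * (m choose j)" by simp
    then have "real (Suc j * (m choose Suc j)) = real ((m - j) * (m choose j))" by simp
    then show ?thesis using assms by (simp add: of_nat_diff algebra_simps)
  qed
  have e: "m - j = Suc (m - Suc j)" using assms by simp
  have "w m a (Suc j) * ((1 - a) * (real j + 1)) =
        (real (m choose Suc j) * (real j + 1)) * a ^ Suc j * (1 - a) ^ Suc (m - Suc j)"
    by (simp add: w_def algebra_simps)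
  also have "\<dots> = real (m choose j) * (real m - real j) * a ^ Suc j * (1 - a) ^ (m - j)"
    using c e by simp
  also have "\<dots> = w m a j * (a * (real m - real j))"
    by (simp add: w_def algebra_simps)
  finally show ?thesis .
qed

lemma w_sym: "j \<le> m \<Longrightarrow> w m a j = w m (1 - a) (m - j)"
  by (simp add: w_def binomial_symmetric[of j m] algebra_simps)

lemma max_core:
  assumes a: "0 < a" "a < 1" and j: "real j \<le> a * real m" and x4: "4 \<le> a * (1 - a) * real m"
  shows "w m a j \<le> 4 / sqrt (a * (1 - a) * real m)"
proof -
  define x where "x = a * (1 - a) * real m"
  define s where "s = sqrt x"
  define L where "L = nat \<lfloor>s / 2\<rfloor>"
  define \<delta> where "\<delta> = (real L + 1) / x"
  have x0: "x > 0" using x4 x_def by simp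
  have s2: "s \<ge> 2" unfolding s_def using x4 x_def real_sqrt_le_mono[of 4 x] by simp
  have ss: "s * s = x" unfolding s_def using x0 by simp
  have L1: "real L \<le> s / 2" unfolding L_def using s2 by linarith
  have L2: "s / 2 < real L + 1" unfolding L_def using s2 by linarith
  have Lx: "real L \<le> x / 4"
  proof -
    have "s * 2 \<le> s * s" using s2 by (intro mult_left_mono) auto
    then have "s / 2 \<le> x / 4" using ss by simp
    then show ?thesis using L1 by simp
  qed
  have LL: "real L * real L \<le> x / 4"
  proof -
    have "real L * real L \<le> (s/2) * (s/2)" using L1 by (intro mult_mono) auto
    then show ?thesis using ss by simp
  qed
  have dx: "\<delta> * x = real L + 1" unfolding \<delta>_def using x0 by simp
  have d0: "0 \<le> \<delta>" unfolding \<delta>_def using x0 by simp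
  have dL: "\<delta> * real L \<le> 1 / 2"
  proof -
    have "\<delta> * real L * x = (\<delta> * x) * real L" by (simp add: algebra_simps)
    also have "\<dots> = (real L + 1) * real L" using dx by simp
    also have "\<dots> \<le> x / 2" using LL Lx by (simp add: algebra_simps)
    finally have "\<delta> * real L * x \<le> 1/2 * x" by simp
    then show ?thesis using x0 by simp
  qed
  have d1: "\<delta> \<le> 1"
  proof -
    have "real L + 1 \<le> x" using Lx x4 x_def by simp
    then show ?thesis unfolding \<delta>_def using x0 by simp
  qed
  have am: "a * real m + real L < real m"
  proof -
    have p: "(1 - a) * real m > 0" using x0 a unfolding x_def by (simp add: zero_less_mult_iff)
    have "a * ((1 - a) * real m) < 4 * ((1 - a) * real m)" using a p by (intro mult_strict_right_mono) auto
    then have "x / 4 < (1 - a) * real m" unfolding x_def by (simp add: mult.assoc)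
    moreover have "(1 - a) * real m = real m - a * real m" by (simp add: algebra_simps)
    ultimately show ?thesis using Lx by linarith
  qed
  have ratio: "w m a (Suc b) \<ge> w m a b * (1 - \<delta>)" if b1: "real b \<le> a * real m + real L" and b2: "b < m" for b
  proof -
    have "a * (real m - real b) \<ge> x - a * real L"
    proof -
      have "a * (real m - real b) \<ge> a * (real m - (a * real m + real L))" using b1 a by (intro mult_left_mono) auto
      then show ?thesis unfolding x_def by (simp add: algebra_simps)
    qed
    moreover have "(1 - a) * (real b + 1) \<le> x + (1 - a) * (real L + 1)"
    proof -
      have "(1 - a) * (real b + 1) \<le> (1 - a) * (a * real m + real L + 1)" using b1 a by (intro mult_left_mono) auto
      then show ?thesis unfolding x_def by (simp add: algebra_simps)
    qed
    then have "(1 - \<delta>) * ((1 - a) * (real b + 1)) \<le> (1 - \<delta>) * (x + (1 - a) * (real L + 1))"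
      using d1 by (intro mult_left_mono) auto
    moreover have "(1 - \<delta>) * (x + (1 - a) * (real L + 1)) \<le> x - a * real L"
    proof -
      have "(1 - \<delta>) * (x + (1 - a) * (real L + 1)) = x - a * (real L + 1) - \<delta> * ((1 - a) * (real L + 1))"
        using dx by (simp add: algebra_simps)
      also have "\<dots> \<le> x - a * real L"
      proof -
        have "\<delta> * ((1 - a) * (real L + 1)) \<ge> 0" using d0 a by simp
        then show ?thesis using a by (simp add: algebra_simps)
      qed
      finally show ?thesis .
    qed
    ultimately have ineq: "(1 - \<delta>) * ((1 - a) * (real b + 1)) \<le> a * (real m - real b)" by linarith
    have "w m a b * (1 - \<delta>) * ((1 - a) * (real b + 1)) \<le> w m a b * (a * (real m - real b))"
      using ineq w_nonneg[of a m b] a by (simp add: mult.assoc mult_left_mono)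
    also have "\<dots> = w m a (Suc b) * ((1 - a) * (real b + 1))" using w_ratio[OF b2] by simp
    finally have "w m a b * (1 - \<delta>) * ((1 - a) * (real b + 1)) \<le> w m a (Suc b) * ((1 - a) * (real b + 1))" .
    moreover have "(1 - a) * (real b + 1) > 0" using a by simp
    ultimately show ?thesis by (meson mult_le_cancel_right_pos)
  qed
  have ind: "t \<le> L \<Longrightarrow> w m a (j + t) \<ge> w m a j * (1 - real t * \<delta>)" for t
  proof (induction t)
    case 0 then show ?case by simp
  next
    case (Suc t)
    then have IH: "w m a (j + t) \<ge> w m a j * (1 - real t * \<delta>)" by simp
    have b1: "real (j + t) \<le> a * real m + real L" using j Suc.prems by simp
    have b2: "j + t < m" using b1 am Suc.prems by simp
    have "w m a (Suc (j + t)) \<ge> w m a (j + t) * (1 - \<delta>)" by (rule ratio[OF b1 b2])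
    moreover have "w m a (j + t) * (1 - \<delta>) \<ge> w m a j * (1 - real t * \<delta>) * (1 - \<delta>)"
      using IH d1 by (intro mult_right_mono) auto
    moreover have "w m a j * (1 - real t * \<delta>) * (1 - \<delta>) \<ge> w m a j * (1 - real (Suc t) * \<delta>)"
    proof -
      have "(1 - real t * \<delta>) * (1 - \<delta>) \<ge> 1 - real (Suc t) * \<delta>"
        using d0 by (simp add: algebra_simps)
      then show ?thesis using w_nonneg[of a m j] a by (simp add: mult.assoc mult_left_mono)
    qed
    ultimately show ?case by simp
  qed
  have jL: "j + L \<le> m" using j am by simp
  have sum1: "(\<Sum>t\<le>L. w m a (j + t)) \<le> 1"
  proof -
    have "(\<Sum>t\<le>L. w m a (j + t)) = (\<Sum>i\<in>(\<lambda>t. j + t) ` {..L}. w m a i)"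
      by (subst sum.reindex) (auto simp: inj_on_def)
    also have "\<dots> \<le> (\<Sum>i\<le>m. w m a i)"
      using jL a by (intro sum_mono2) (auto simp: w_nonneg)
    finally show ?thesis by (simp add: w_sum)
  qed
  have "(\<Sum>t\<le>L. w m a j / 2) \<le> (\<Sum>t\<le>L. w m a (j + t))"
  proof (intro sum_mono)
    fix t assume "t \<in> {..L}"
    then have t: "t \<le> L" by simp
    have "real t * \<delta> \<le> real L * \<delta>" using mult_right_mono[OF of_nat_mono[OF t] d0] .
    then have "real t * \<delta> \<le> 1/2" using dL by (simp add: mult.commute)
    then have "w m a j * (1/2) \<le> w m a j * (1 - real t * \<delta>)" using w_nonneg[of a m j] a
      by (intro mult_left_mono) auto
    then have "w m a j / 2 \<le> w m a j * (1 - real t * \<delta>)" by simp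
    then show "w m a j / 2 \<le> w m a (j + t)" using ind[OF t] by simp
  qed
  then have "(real L + 1) * w m a j / 2 \<le> 1" using sum1 by (simp add: algebra_simps)
  then have "w m a j \<le> 2 / (real L + 1)" by (simp add: field_simps)
  also have "\<dots> \<le> 2 / (s / 2)" using L2 s2 by (intro divide_left_mono) auto
  also have "\<dots> = 4 / sqrt (a * (1 - a) * real m)" by (simp add: s_def x_def)
  finally show ?thesis .
qed

lemma w_max:
  assumes a: "0 < a" "a < 1" and m: "m \<ge> 1"
  shows "w m a j \<le> 4 / sqrt (a * (1 - a) * real m)"
proof (cases "4 \<le> a * (1 - a) * real m")
  case False
  have xp: "0 < a * (1 - a) * real m" using a m by simp
  have "sqrt (a * (1 - a) * real m) < 2" using False xp
    by (metis real_sqrt_four real_sqrt_less_mono not_le)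
  then have "2 \<le> 4 / sqrt (a * (1 - a) * real m)" using xp by (simp add: field_simps)
  then show ?thesis using w_le1[of a m j] a by simp
next
  case True
  show ?thesis
  proof (cases "real j \<le> a * real m")
    case True2: True
    show ?thesis by (rule max_core[OF a True2 True])
  next
    case False
    show ?thesis
    proof (cases "j \<le> m")
      case jm: True
      have "w m a j = w m (1 - a) (m - j)" by (rule w_sym[OF jm])
      also have "\<dots> \<le> 4 / sqrt ((1 - a) * (1 - (1 - a)) * real m)"
        using a False jm True by (intro max_core) (auto simp: of_nat_diff algebra_simps)
      finally show ?thesis by (simp add: algebra_simps)
    next
      case False
      then have "w m a j = 0" by (simp add: w_big)
      then show ?thesis using a by simp
    qed
  qed
qed


definition TVf :: "(nat \<Rightarrow> real) \<Rightarrow> nat \<Rightarrow> real" where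
  "TVf f m = \<bar>f 0\<bar> + (\<Sum>b\<le>m. \<bar>f (Suc b) - f b\<bar>)"

lemma tv_unimodal:
  fixes f :: "nat \<Rightarrow> real"
  assumes tm: "t \<le> m" and up: "\<And>b. b < t \<Longrightarrow> f b \<le> f (Suc b)"
    and down: "\<And>b. t \<le> b \<Longrightarrow> b \<le> m \<Longrightarrow> f (Suc b) \<le> f b"
    and fm: "f (Suc m) = 0" and f0: "f 0 \<ge> 0"
  shows "TVf f m = 2 * f t"
proof -
  have g: "\<bar>f (Suc b) - f b\<bar> = (f b - f (Suc b)) + (if b \<in> {..<t} then 2 * (f (Suc b) - f b) else 0)"
    if "b \<in> {..<Suc m}" for b
    using up[of b] down[of b] that by auto
  have "(\<Sum>b\<le>m. \<bar>f (Suc b) - f b\<bar>) = (\<Sum>b<Suc m. \<bar>f (Suc b) - f b\<bar>)"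
    by (simp add: lessThan_Suc_atMost)
  also have "\<dots> = (\<Sum>b<Suc m. f b - f (Suc b)) + (\<Sum>b<Suc m. if b \<in> {..<t} then 2 * (f (Suc b) - f b) else 0)"
    by (simp add: g sum.distrib)
  also have "(\<Sum>b<Suc m. f b - f (Suc b)) = f 0 - f (Suc m)" by (rule sum_lessThan_telescope')
  also have "(\<Sum>b<Suc m. if b \<in> {..<t} then 2 * (f (Suc b) - f b) else 0) = (\<Sum>b\<in>{..<Suc m} \<inter> {..<t}. 2 * (f (Suc b) - f b))"
    by (rule sum.inter_restrict[symmetric]) simp
  also have "{..<Suc m} \<inter> {..<t} = {..<t}" using tm by auto
  also have "(\<Sum>b<t. 2 * (f (Suc b) - f b)) = 2 * (f t - f 0)"
    by (simp only: sum_distrib_left[symmetric] sum_lessThan_telescope)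
  finally show ?thesis unfolding TVf_def using fm f0 by simp
qed

lemma w_pos: "0 < a \<Longrightarrow> a < 1 \<Longrightarrow> b \<le> m \<Longrightarrow> 0 < w m a b"
  by (simp add: w_def)

lemma tv_w:
  assumes a: "0 < a" "a < 1" and m: "m \<ge> 1"
  shows "TVf (w m a) m \<le> 8 / sqrt (a * (1 - a) * real m)"
proof -
  define t where "t = nat \<lfloor>a * (real m + 1)\<rfloor>"
  have t1: "real t \<le> a * (real m + 1)" unfolding t_def using a by (simp add: of_nat_nat)
  have t2: "a * (real m + 1) < real t + 1" unfolding t_def using a by linarith
  have tm: "t \<le> m"
  proof -
    have "a * (real m + 1) < real m + 1" using a by simp
    then have "real t < real m + 1" using t1 by linarith
    then have "real t < real (Suc m)" by simp
    then have "t < Suc m" by (simp only: of_nat_less_iff)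
    then show ?thesis by simp
  qed
  have "TVf (w m a) m = 2 * w m a t"
  proof (rule tv_unimodal[OF tm])
    fix b assume b: "b < t"
    then have bm: "b < m" using tm by simp
    have "real b + 1 \<le> a * (real m + 1)" using b t1 by (metis Suc_leI of_nat_Suc of_nat_mono add.commute order.trans)
    then have ineq: "(1 - a) * (real b + 1) \<le> a * (real m - real b)" by (simp add: algebra_simps)
    have "w m a b * ((1 - a) * (real b + 1)) \<le> w m a b * (a * (real m - real b))"
      using ineq w_nonneg[of a m b] a by (intro mult_left_mono) auto
    also have "\<dots> = w m a (Suc b) * ((1 - a) * (real b + 1))" using w_ratio[OF bm] by simp
    finally show "w m a b \<le> w m a (Suc b)" using a by (simp add: mult_le_cancel_right_pos)
  next
    fix b assume b: "t \<le> b" "b \<le> m"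
    show "w m a (Suc b) \<le> w m a b"
    proof (cases "b = m")
      case True then show ?thesis using w_nonneg[of a m m] a by (simp add: w_big)
    next
      case False
      then have bm: "b < m" using b by simp
      have "a * (real m + 1) < real b + 1" using t2 b by (meson add_le_cancel_right of_nat_le_iff order_less_le_trans)
      then have ineq: "a * (real m - real b) \<le> (1 - a) * (real b + 1)" by (simp add: algebra_simps)
      have "w m a (Suc b) * ((1 - a) * (real b + 1)) = w m a b * (a * (real m - real b))" using w_ratio[OF bm] by simp
      also have "\<dots> \<le> w m a b * ((1 - a) * (real b + 1))"
        using ineq w_nonneg[of a m b] a by (intro mult_left_mono) auto
      finally show ?thesis using a by (simp add: mult_le_cancel_right_pos)
    qed
  next
    show "w m a (Suc m) = 0" by (simp add: w_big)
    show "0 \<le> w m a 0" using a by (simp add: w_nonneg)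
  qed
  also have "\<dots> \<le> 2 * (4 / sqrt (a * (1 - a) * real m))" using w_max[OF a m, of t] by simp
  finally show ?thesis by simp
qed

lemma count_dvd:
  fixes z :: int and D :: nat
  assumes D: "D \<ge> 1"
  shows "(\<Sum>e<D. if int D dvd z + int e then 1 else 0 :: real) = 1"
proof -
  define r where "r = (-z) mod int D"
  have r: "0 \<le> r" "r < int D" using D unfolding r_def by auto
  have iff: "int D dvd z + int e \<longleftrightarrow> e = nat r" if e: "e < D" for e
  proof -
    have "int D dvd z + int e \<longleftrightarrow> int e mod int D = (-z) mod int D"
      by (simp add: mod_eq_dvd_iff add.commute)
    also have "int e mod int D = int e" using e by simp
    finally show ?thesis using r unfolding r_def by auto
  qed
  have "(\<Sum>e<D. if int D dvd z + int e then 1 else 0 :: real) = (\<Sum>e<D. if e = nat r then 1 else 0)"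
    by (rule sum.cong) (auto simp: iff)
  also have "\<dots> = 1" using r by simp
  finally show ?thesis .
qed

lemma residue:
  fixes f :: "nat \<Rightarrow> real" and D :: nat and c :: int
  assumes D: "D \<ge> 1" and fm: "f (Suc m) = 0" and fs: "(\<Sum>b\<le>m. f b) = 1"
  shows "\<bar>(\<Sum>b\<le>m. f b * (if int D dvd c - int b then 1 else 0)) - 1 / real D\<bar> \<le> TVf f m"
proof -
  define ind where "ind z = (if int D dvd z then 1 else 0 :: real)" for z
  define F where "F z = (\<Sum>b\<le>m. f b * ind (z - int b))" for z
  have step: "F (z + 1) - F z = f 0 * ind (z + 1) + (\<Sum>b\<le>m. (f (Suc b) - f b) * ind (z - int b))" for z
  proof -
    have "F (z + 1) = (\<Sum>b\<le>Suc m. f b * ind (z + 1 - int b))" unfolding F_def using fm by simp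
    also have "\<dots> = f 0 * ind (z + 1) + (\<Sum>b\<le>m. f (Suc b) * ind (z - int b))"
      by (subst sum.atMost_Suc_shift) simp
    finally show ?thesis unfolding F_def by (simp add: sum_subtractf algebra_simps)
  qed
  have ind01: "0 \<le> ind z" "ind z \<le> 1" for z by (auto simp: ind_def)
  have cnt: "(\<Sum>e<D. ind (z + int e)) = 1" for z unfolding ind_def by (rule count_dvd[OF D])
  have bnd: "(\<Sum>e<D. \<bar>F (z + int e + 1) - F (z + int e)\<bar>) \<le> TVf f m" for z
  proof -
    have "(\<Sum>e<D. \<bar>F (z + int e + 1) - F (z + int e)\<bar>) \<le>
          (\<Sum>e<D. \<bar>f 0\<bar> * ind (z + int e + 1) + (\<Sum>b\<le>m. \<bar>f (Suc b) - f b\<bar> * ind (z + int e - int b)))"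
    proof (rule sum_mono)
      fix e
      have "\<bar>F (z + int e + 1) - F (z + int e)\<bar> = \<bar>f 0 * ind (z + int e + 1) + (\<Sum>b\<le>m. (f (Suc b) - f b) * ind (z + int e - int b))\<bar>"
        by (simp add: step)
      also have "\<dots> \<le> \<bar>f 0 * ind (z + int e + 1)\<bar> + \<bar>\<Sum>b\<le>m. (f (Suc b) - f b) * ind (z + int e - int b)\<bar>"
        by (rule abs_triangle_ineq)
      also have "\<bar>\<Sum>b\<le>m. (f (Suc b) - f b) * ind (z + int e - int b)\<bar> \<le> (\<Sum>b\<le>m. \<bar>(f (Suc b) - f b) * ind (z + int e - int b)\<bar>)"
        by (rule sum_abs)
      finally show "\<bar>F (z + int e + 1) - F (z + int e)\<bar> \<le> \<bar>f 0\<bar> * ind (z + int e + 1) + (\<Sum>b\<le>m. \<bar>f (Suc b) - f b\<bar> * ind (z + int e - int b))"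
        using ind01 by (simp add: abs_mult)
    qed
    also have "\<dots> = \<bar>f 0\<bar> * (\<Sum>e<D. ind ((z + 1) + int e)) + (\<Sum>b\<le>m. \<bar>f (Suc b) - f b\<bar> * (\<Sum>e<D. ind ((z - int b) + int e)))"
      by (simp add: sum.distrib sum_distrib_left sum.swap[of _ "{..<D}"] algebra_simps)
    also have "\<dots> = TVf f m" by (simp add: cnt TVf_def)
    finally show ?thesis .
  qed
  have tele: "\<bar>F (z + int s) - F z\<bar> \<le> (\<Sum>e<s. \<bar>F (z + int e + 1) - F (z + int e)\<bar>)" for z s
  proof (induction s)
    case 0 then show ?case by simp
  next
    case (Suc s)
    have e: "z + int (Suc s) = z + int s + 1" by simp
    have "\<bar>F (z + int (Suc s)) - F z\<bar> \<le> \<bar>F (z + int s + 1) - F (z + int s)\<bar> + \<bar>F (z + int s) - F z\<bar>"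
      using abs_triangle_ineq[of "F (z + int s + 1) - F (z + int s)" "F (z + int s) - F z"] unfolding e by simp
    then show ?case using Suc by simp
  qed
  have close: "\<bar>F z - F (z + int s)\<bar> \<le> TVf f m" if s: "s < D" for z s
  proof -
    have "\<bar>F z - F (z + int s)\<bar> \<le> (\<Sum>e<s. \<bar>F (z + int e + 1) - F (z + int e)\<bar>)"
      using tele[of z s] by (simp add: abs_minus_commute)
    also have "\<dots> \<le> (\<Sum>e<D. \<bar>F (z + int e + 1) - F (z + int e)\<bar>)"
      using s by (intro sum_mono2) auto
    finally show ?thesis using bnd[of z] by simp
  qed
  have tot: "(\<Sum>s<D. F (z + int s)) = 1" for z
  proof -
    have "(\<Sum>s<D. F (z + int s)) = (\<Sum>b\<le>m. f b * (\<Sum>s<D. ind ((z - int b) + int s)))"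
      unfolding F_def by (simp add: sum_distrib_left sum.swap[of _ "{..<D}"] algebra_simps)
    also have "\<dots> = 1" by (simp add: cnt fs)
    finally show ?thesis .
  qed
  have "real D * F c - 1 = (\<Sum>s<D. F c - F (c + int s))"
    using tot[of c] by (simp add: sum_subtractf)
  then have "\<bar>real D * F c - 1\<bar> \<le> (\<Sum>s<D. \<bar>F c - F (c + int s)\<bar>)"
    by (metis sum_abs)
  also have "\<dots> \<le> (\<Sum>s<D. TVf f m)" by (intro sum_mono close) simp
  finally have "\<bar>real D * F c - 1\<bar> \<le> real D * TVf f m" by simp
  moreover have "real D * F c - 1 = real D * (F c - 1 / real D)" using D by (simp add: algebra_simps)
  ultimately have "real D * \<bar>F c - 1 / real D\<bar> \<le> real D * TVf f m" by (simp add: abs_mult)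
  then have "\<bar>F c - 1 / real D\<bar> \<le> TVf f m" using D by simp
  then show ?thesis unfolding F_def ind_def by simp
qed


definition visk :: "nat \<Rightarrow> nat \<Rightarrow> nat \<Rightarrow> nat \<Rightarrow> real" where
  "visk b1 b2 k x = (if b_visible (b1,b2) (int x, int (k - x)) then 1 else 0)"

definition ck :: "nat \<Rightarrow> nat \<Rightarrow> nat \<Rightarrow> real" where
  "ck b1 b2 k = (\<Sum>T\<in>Pow (Sset b1 k). (-1) ^ card T / real (\<Prod>q\<in>T. q ^ b2))"

lemma g_close:
  fixes b1 b2 k i a0 :: nat and a :: real
  assumes b1: "b1 \<ge> 1" and b12: "b1 \<le> b2" and g: "coprime b1 b2"
    and a: "0 < a" "a < 1" and ik: "i < k" and a0: "a0 \<le> i"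
  shows "\<bar>(\<Sum>b\<le>k - i. w (k - i) a b * visk b1 b2 k (a0 + b)) - ck b1 b2 k\<bar>
           \<le> (2 ^ card (Sset b1 k) + 1) * (8 / sqrt (a * (1 - a) * real (k - i)))"
proof -
  define m where "m = k - i"
  define S where "S = Sset b1 k"
  define E where "E = 8 / sqrt (a * (1 - a) * real m)"
  have m1: "m \<ge> 1" using ik m_def by simp
  have k1: "k \<ge> 1" using ik by simp
  have fS: "finite S" unfolding S_def using Sset_finite[OF k1 b1] .
  have pS: "\<forall>q\<in>S. prime q" unfolding S_def Sset_def by simp
  define h where "h x = (if \<forall>q\<in>S. \<not> q ^ b2 dvd (k - x) then 1 else 0 :: real)" for x
  define dT :: "nat set \<Rightarrow> nat" where "dT T = (\<Prod>q\<in>T. q ^ b2)" for T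
  have dT1: "dT T \<ge> 1" if "T \<in> Pow S" for T
  proof -
    have "dT T > 0" unfolding dT_def using that pS by (intro prod_pos) (auto simp: prime_gt_0_nat)
    then show ?thesis by simp
  qed
  have wn: "\<And>b. 0 \<le> w m a b" using a by (simp add: w_nonneg)
  have wmax: "\<And>b. w m a b \<le> E / 2" unfolding E_def using w_max[OF a m1] by simp
  have E0: "0 \<le> E" unfolding E_def using a by simp
  have edge: "\<bar>(\<Sum>b\<le>m. w m a b * visk b1 b2 k (a0 + b)) - (\<Sum>b\<le>m. w m a b * h (a0 + b))\<bar> \<le> E"
  proof -
    have pt: "\<bar>w m a b * visk b1 b2 k (a0 + b) - w m a b * h (a0 + b)\<bar> \<le>
               w m a b * ((if b = 0 then 1 else 0) + (if b = k - a0 then 1 else 0))" if b: "b \<le> m" for b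
    proof (cases "1 \<le> a0 + b \<and> a0 + b < k")
      case True
      then have "visk b1 b2 k (a0 + b) = h (a0 + b)"
        unfolding visk_def h_def S_def using vis_line[OF b1 b12 g, of "a0 + b" k] by simp
      then show ?thesis using wn[of b] by simp
    next
      case False
      have "a0 + b \<le> k" using b a0 ik m_def by simp
      then have "b = 0 \<or> b = k - a0" using False by auto
      moreover have "\<bar>visk b1 b2 k (a0 + b) - h (a0 + b)\<bar> \<le> 1" by (simp add: visk_def h_def)
      ultimately have M: "\<bar>visk b1 b2 k (a0 + b) - h (a0 + b)\<bar> \<le> (if b = 0 then 1 else 0) + (if b = k - a0 then 1 else 0 :: real)"
        by auto
      have "\<bar>w m a b * visk b1 b2 k (a0 + b) - w m a b * h (a0 + b)\<bar> = w m a b * \<bar>visk b1 b2 k (a0 + b) - h (a0 + b)\<bar>"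
        using wn[of b] by (simp add: right_diff_distrib[symmetric] abs_mult)
      also have "\<dots> \<le> w m a b * ((if b = 0 then 1 else 0) + (if b = k - a0 then 1 else 0))"
        using M wn[of b] by (intro mult_left_mono) auto
      finally show ?thesis .
    qed
    have "\<bar>(\<Sum>b\<le>m. w m a b * visk b1 b2 k (a0 + b)) - (\<Sum>b\<le>m. w m a b * h (a0 + b))\<bar>
        = \<bar>\<Sum>b\<le>m. w m a b * visk b1 b2 k (a0 + b) - w m a b * h (a0 + b)\<bar>" by (simp add: sum_subtractf)
    also have "\<dots> \<le> (\<Sum>b\<le>m. \<bar>w m a b * visk b1 b2 k (a0 + b) - w m a b * h (a0 + b)\<bar>)" by (rule sum_abs)
    also have "\<dots> \<le> (\<Sum>b\<le>m. w m a b * ((if b = 0 then 1 else 0) + (if b = k - a0 then 1 else 0)))"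
      by (intro sum_mono pt) simp
    also have "\<dots> = (\<Sum>b\<le>m. (if b = 0 then w m a b else 0) + (if b = k - a0 then w m a b else 0))"
      by (intro sum.cong) auto
    also have "\<dots> = (\<Sum>b\<le>m. (if b = 0 then w m a b else 0)) + (\<Sum>b\<le>m. (if b = k - a0 then w m a b else 0))"
      by (rule sum.distrib)
    also have "\<dots> \<le> E / 2 + E / 2"
    proof (intro add_mono)
      show "(\<Sum>b\<le>m. (if b = 0 then w m a b else 0)) \<le> E / 2" using wmax[of 0] E0 by simp
      show "(\<Sum>b\<le>m. (if b = k - a0 then w m a b else 0)) \<le> E / 2" using wmax[of "k - a0"] E0 by simp
    qed
    finally show ?thesis by simp
  qed
  have hexp: "h (a0 + b) = (\<Sum>T\<in>Pow S. (-1) ^ card T * (if int (dT T) dvd int (k - a0) - int b then 1 else 0))"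
    if b: "b \<le> m" for b
  proof -
    have kb: "k - (a0 + b) = (k - a0) - b" by simp
    have le: "b \<le> k - a0" using b a0 m_def by simp
    have "h (a0 + b) = (\<Sum>T\<in>Pow S. (-1) ^ card T * (if dT T dvd (k - (a0 + b)) then 1 else 0))"
      unfolding h_def dT_def by (rule incl_excl[OF fS pS])
    also have "\<dots> = (\<Sum>T\<in>Pow S. (-1) ^ card T * (if int (dT T) dvd int (k - a0) - int b then 1 else 0))"
    proof (rule sum.cong[OF refl])
      fix T
      have "dT T dvd (k - (a0 + b)) \<longleftrightarrow> int (dT T) dvd int ((k - a0) - b)" by (simp only: kb int_dvd_int_iff)
      also have "int ((k - a0) - b) = int (k - a0) - int b" using le by simp
      finally show "(-1) ^ card T * (if dT T dvd (k - (a0 + b)) then 1 else 0 :: real) =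
                    (-1) ^ card T * (if int (dT T) dvd int (k - a0) - int b then 1 else 0)" by simp
    qed
    finally show ?thesis .
  qed
  have main: "\<bar>(\<Sum>b\<le>m. w m a b * h (a0 + b)) - ck b1 b2 k\<bar> \<le> 2 ^ card S * E"
  proof -
    define FT where "FT T = (\<Sum>b\<le>m. w m a b * (if int (dT T) dvd int (k - a0) - int b then 1 else 0))" for T
    have "(\<Sum>b\<le>m. w m a b * h (a0 + b)) = (\<Sum>b\<le>m. \<Sum>T\<in>Pow S. w m a b * ((-1) ^ card T * (if int (dT T) dvd int (k - a0) - int b then 1 else 0)))"
      by (intro sum.cong refl) (simp add: hexp sum_distrib_left)
    also have "\<dots> = (\<Sum>T\<in>Pow S. (-1) ^ card T * FT T)"
      unfolding FT_def by (subst sum.swap) (simp add: sum_distrib_left algebra_simps)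
    finally have e1: "(\<Sum>b\<le>m. w m a b * h (a0 + b)) = (\<Sum>T\<in>Pow S. (-1) ^ card T * FT T)" .
    have e2: "ck b1 b2 k = (\<Sum>T\<in>Pow S. (-1) ^ card T * (1 / real (dT T)))"
      unfolding ck_def S_def dT_def by simp
    have "\<bar>(\<Sum>b\<le>m. w m a b * h (a0 + b)) - ck b1 b2 k\<bar> = \<bar>\<Sum>T\<in>Pow S. (-1) ^ card T * (FT T - 1 / real (dT T))\<bar>"
      unfolding e1 e2 by (simp add: sum_subtractf right_diff_distrib)
    also have "\<dots> \<le> (\<Sum>T\<in>Pow S. \<bar>(-1) ^ card T * (FT T - 1 / real (dT T))\<bar>)" by (rule sum_abs)
    also have "\<dots> \<le> (\<Sum>T\<in>Pow S. E)"
    proof (rule sum_mono)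
      fix T assume T: "T \<in> Pow S"
      have "\<bar>FT T - 1 / real (dT T)\<bar> \<le> TVf (w m a) m"
        unfolding FT_def by (rule residue[OF dT1[OF T]]) (simp_all add: w_big w_sum)
      also have "\<dots> \<le> E" unfolding E_def using tv_w[OF a m1] .
      finally show "\<bar>(-1) ^ card T * (FT T - 1 / real (dT T))\<bar> \<le> E" by (simp add: abs_mult)
    qed
    also have "\<dots> = 2 ^ card S * E" using fS by (simp add: card_Pow)
    finally show ?thesis .
  qed
  have "\<bar>(\<Sum>b\<le>m. w m a b * visk b1 b2 k (a0 + b)) - ck b1 b2 k\<bar> \<le> E + 2 ^ card S * E"
    using edge main by linarith
  also have "E + 2 ^ card S * E = (2 ^ card S + 1) * E" by (simp add: algebra_simps)
  finally show ?thesis unfolding m_def[symmetric] E_def S_def .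
qed


lemma PiM_Pi_pmf:
  assumes fJ: "finite J"
  shows "distr (measure_pmf (Pi_pmf J d p)) (PiM J (\<lambda>i. measure_pmf (p i))) (\<lambda>x. restrict x J)
         = PiM J (\<lambda>i. measure_pmf (p i))"
proof -
  interpret product_prob_space "\<lambda>i. measure_pmf (p i)"
    by (rule product_prob_spaceI) (rule measure_pmf.prob_space_axioms)
  have mr: "(\<lambda>x. restrict x J) \<in> measurable (measure_pmf (Pi_pmf J d p)) (PiM J (\<lambda>i. measure_pmf (p i)))"
    by (simp add: measurable_count_space_eq1 measurable_cong_sets[OF sets_measure_pmf_count_space refl] space_PiM)
  show ?thesis
  proof (rule PiM_eqI[OF fJ])
    show "sets (distr (measure_pmf (Pi_pmf J d p)) (PiM J (\<lambda>i. measure_pmf (p i))) (\<lambda>x. restrict x J)) =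
          sets (PiM J (\<lambda>i. measure_pmf (p i)))" by simp
  next
    fix A assume A: "\<And>i. i \<in> J \<Longrightarrow> A i \<in> sets (measure_pmf (p i))"
    have inS: "Pi\<^sub>E J A \<in> sets (PiM J (\<lambda>i. measure_pmf (p i)))" using A fJ by (intro sets_PiM_I_finite) auto
    have "emeasure (distr (measure_pmf (Pi_pmf J d p)) (PiM J (\<lambda>i. measure_pmf (p i))) (\<lambda>x. restrict x J)) (Pi\<^sub>E J A)
        = emeasure (measure_pmf (Pi_pmf J d p)) ((\<lambda>x. restrict x J) -` Pi\<^sub>E J A \<inter> space (measure_pmf (Pi_pmf J d p)))"
      by (rule emeasure_distr[OF mr inS])
    also have "\<dots> = emeasure (measure_pmf (Pi_pmf J d p)) (PiE_dflt J d A)"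
      by (intro emeasure_eq_AE AE_pmfI) (auto simp: PiE_dflt_def set_Pi_pmf fJ)
    also have "\<dots> = (\<Prod>i\<in>J. emeasure (measure_pmf (p i)) (A i))"
      by (simp add: measure_pmf.emeasure_eq_measure measure_Pi_pmf_PiE_dflt fJ prod_ennreal)
    finally show "emeasure (distr (measure_pmf (Pi_pmf J d p)) (PiM J (\<lambda>i. measure_pmf (p i))) (\<lambda>x. restrict x J)) (Pi\<^sub>E J A)
        = (\<Prod>i\<in>J. emeasure (measure_pmf (p i)) (A i))" .
  qed
qed

lemma fin_meas:
  fixes G :: "('a \<Rightarrow> 'b) \<Rightarrow> real"
  assumes fJ: "finite J" and fb: "finite (UNIV :: 'b set)"
  shows "G \<in> borel_measurable (PiM J (\<lambda>i. measure_pmf (p i)))"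
proof -
  define Sp where "Sp = (PiE J (\<lambda>_. UNIV) :: ('a \<Rightarrow> 'b) set)"
  have fSp: "finite Sp" unfolding Sp_def using fJ fb by (intro finite_PiE) auto
  have sp: "space (PiM J (\<lambda>i. measure_pmf (p i))) = Sp" by (simp add: space_PiM Sp_def)
  have sing: "{g} \<in> sets (PiM J (\<lambda>i. measure_pmf (p i)))" if "g \<in> Sp" for g
  proof -
    have "{g} = PiE J (\<lambda>x. {g x})" using that unfolding Sp_def by (intro PiE_singleton[symmetric]) (simp add: PiE_iff)
    also have "\<dots> \<in> sets (PiM J (\<lambda>i. measure_pmf (p i)))" using fJ by (intro sets_PiM_I_finite) auto
    finally show ?thesis .
  qed
  have "(\<lambda>f. \<Sum>g\<in>Sp. G g * indicator {g} f) \<in> borel_measurable (PiM J (\<lambda>i. measure_pmf (p i)))"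
    using sing by (intro borel_measurable_sum borel_measurable_times borel_measurable_const borel_measurable_indicator) auto
  moreover have "(\<Sum>g\<in>Sp. G g * indicator {g} f) = G f" if "f \<in> space (PiM J (\<lambda>i. measure_pmf (p i)))" for f
  proof -
    have "f \<in> Sp" using that sp by simp
    then show ?thesis using fSp by (simp add: indicator_def)
  qed
  ultimately show ?thesis by (rule measurable_cong[THEN iffD1, rotated]) simp
qed

lemma bridge:
  fixes G :: "('a \<Rightarrow> bool) \<Rightarrow> real"
  assumes fJ: "finite J" and JI: "J \<subseteq> I" and dep: "\<And>f g. (\<forall>x\<in>J. f x = g x) \<Longrightarrow> G f = G g"
  shows "G \<in> borel_measurable (PiM I (\<lambda>i. measure_pmf (p i)))"
    and "integral\<^sup>L (PiM I (\<lambda>i. measure_pmf (p i))) G = measure_pmf.expectation (Pi_pmf J d p) G"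
proof -
  interpret product_prob_space "\<lambda>i. measure_pmf (p i)"
    by (rule product_prob_spaceI) (rule measure_pmf.prob_space_axioms)
  have GJ: "G \<in> borel_measurable (PiM J (\<lambda>i. measure_pmf (p i)))" by (rule fin_meas[OF fJ]) simp
  have mr: "(\<lambda>\<omega>. restrict \<omega> J) \<in> measurable (PiM I (\<lambda>i. measure_pmf (p i))) (PiM J (\<lambda>i. measure_pmf (p i)))"
    by (rule measurable_restrict_subset[OF JI])
  have eqr: "G (restrict \<omega> J) = G \<omega>" for \<omega> by (rule dep) simp
  have m2: "(\<lambda>\<omega>. G (restrict \<omega> J)) \<in> borel_measurable (PiM I (\<lambda>i. measure_pmf (p i)))"
    by (rule measurable_compose[OF mr GJ])
  then show "G \<in> borel_measurable (PiM I (\<lambda>i. measure_pmf (p i)))" by (simp add: eqr)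
  have mr2: "(\<lambda>x. restrict x J) \<in> measurable (measure_pmf (Pi_pmf J d p)) (PiM J (\<lambda>i. measure_pmf (p i)))"
    by (simp add: measurable_count_space_eq1 measurable_cong_sets[OF sets_measure_pmf_count_space refl] space_PiM)
  have "integral\<^sup>L (PiM I (\<lambda>i. measure_pmf (p i))) G = integral\<^sup>L (PiM I (\<lambda>i. measure_pmf (p i))) (\<lambda>\<omega>. G (restrict \<omega> J))"
    by (simp add: eqr)
  also have "\<dots> = integral\<^sup>L (distr (PiM I (\<lambda>i. measure_pmf (p i))) (PiM J (\<lambda>i. measure_pmf (p i))) (\<lambda>\<omega>. restrict \<omega> J)) G"
    by (rule integral_distr[OF mr GJ, symmetric])
  also have "\<dots> = integral\<^sup>L (PiM J (\<lambda>i. measure_pmf (p i))) G"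
    by (simp add: distr_PiM_restrict_finite[OF fJ JI])
  also have "\<dots> = integral\<^sup>L (distr (measure_pmf (Pi_pmf J d p)) (PiM J (\<lambda>i. measure_pmf (p i))) (\<lambda>x. restrict x J)) G"
    by (simp add: PiM_Pi_pmf[OF fJ])
  also have "\<dots> = measure_pmf.expectation (Pi_pmf J d p) (\<lambda>x. G (restrict x J))"
    by (rule integral_distr[OF mr2 GJ])
  also have "\<dots> = measure_pmf.expectation (Pi_pmf J d p) G" by (simp add: eqr)
  finally show "integral\<^sup>L (PiM I (\<lambda>i. measure_pmf (p i))) G = measure_pmf.expectation (Pi_pmf J d p) G" .
qed


lemma fin_Pi: "finite J \<Longrightarrow> finite (set_pmf (Pi_pmf J (d::bool) p))"
proof -
  assume J: "finite J"
  have "set_pmf (Pi_pmf J d p) \<subseteq> PiE_dflt J d (\<lambda>_. UNIV)"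
    using set_Pi_pmf_subset[OF J, of d p] by (auto simp: PiE_dflt_def)
  moreover have "finite (PiE_dflt J d (\<lambda>_. UNIV :: bool set))" using J by (intro finite_PiE_dflt) auto
  ultimately show ?thesis by (rule finite_subset)
qed

lemma exp_sum_pmf:
  fixes F :: "'a \<Rightarrow> real"
  assumes "finite (set_pmf X)"
  shows "measure_pmf.expectation X F = (\<Sum>a\<in>set_pmf X. F a * pmf X a)"
  using assms by (intro integral_measure_pmf_real) auto

lemma pair_exp:
  fixes F :: "'a \<Rightarrow> real" and G :: "'b \<Rightarrow> real"
  assumes fX: "finite (set_pmf X)" and fY: "finite (set_pmf Y)"
  shows "measure_pmf.expectation (pair_pmf X Y) (\<lambda>z. F (fst z) * G (snd z)) =
         measure_pmf.expectation X F * measure_pmf.expectation Y G"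
proof -
  have fXY: "finite (set_pmf (pair_pmf X Y))" using fX fY by simp
  have "measure_pmf.expectation (pair_pmf X Y) (\<lambda>z. F (fst z) * G (snd z)) =
        (\<Sum>z\<in>set_pmf X \<times> set_pmf Y. F (fst z) * G (snd z) * pmf (pair_pmf X Y) z)"
    using exp_sum_pmf[OF fXY] by simp
  also have "\<dots> = (\<Sum>(a,b)\<in>set_pmf X \<times> set_pmf Y. (F a * pmf X a) * (G b * pmf Y b))"
    by (intro sum.cong refl) (auto simp: pmf_pair)
  also have "\<dots> = (\<Sum>a\<in>set_pmf X. \<Sum>b\<in>set_pmf Y. (F a * pmf X a) * (G b * pmf Y b))"
    by (rule sum.cartesian_product[symmetric])
  also have "\<dots> = (\<Sum>a\<in>set_pmf X. F a * pmf X a) * (\<Sum>b\<in>set_pmf Y. G b * pmf Y b)"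
    by (simp add: sum_product)
  also have "\<dots> = measure_pmf.expectation X F * measure_pmf.expectation Y G"
    using exp_sum_pmf[OF fX] exp_sum_pmf[OF fY] by simp
  finally show ?thesis .
qed

lemma exp_union_prod:
  fixes F G :: "('a \<Rightarrow> bool) \<Rightarrow> real"
  assumes A: "finite A" and B: "finite B" and AB: "A \<inter> B = {}"
    and dF: "\<And>f g. (\<forall>x\<in>A. f x = g x) \<Longrightarrow> F f = F g"
    and dG: "\<And>f g. (\<forall>x\<in>B. f x = g x) \<Longrightarrow> G f = G g"
  shows "measure_pmf.expectation (Pi_pmf (A \<union> B) d p) (\<lambda>f. F f * G f) =
         measure_pmf.expectation (Pi_pmf A d p) F * measure_pmf.expectation (Pi_pmf B d p) G"
proof -
  define h where "h = (\<lambda>(f::'a \<Rightarrow> bool, g::'a \<Rightarrow> bool) x. if x \<in> A then f x else g x)"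
  have "Pi_pmf (A \<union> B) d p = map_pmf h (pair_pmf (Pi_pmf A d p) (Pi_pmf B d p))"
    unfolding h_def by (rule Pi_pmf_union[OF A B AB])
  then have "measure_pmf.expectation (Pi_pmf (A \<union> B) d p) (\<lambda>f. F f * G f) =
      measure_pmf.expectation (pair_pmf (Pi_pmf A d p) (Pi_pmf B d p)) (\<lambda>z. F (h z) * G (h z))"
    by simp
  also have "\<dots> = measure_pmf.expectation (pair_pmf (Pi_pmf A d p) (Pi_pmf B d p)) (\<lambda>z. F (fst z) * G (snd z))"
  proof (rule Bochner_Integration.integral_cong[OF refl])
    fix z :: "('a \<Rightarrow> bool) \<times> ('a \<Rightarrow> bool)"
    obtain f g where z: "z = (f, g)" by (cases z)
    have "F (h z) = F f" by (rule dF) (simp add: h_def z)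
    moreover have "G (h z) = G g" by (rule dG) (use AB in \<open>auto simp: h_def z\<close>)
    ultimately show "F (h z) * G (h z) = F (fst z) * G (snd z)" by (simp add: z)
  qed
  also have "\<dots> = measure_pmf.expectation (Pi_pmf A d p) F * measure_pmf.expectation (Pi_pmf B d p) G"
    by (rule pair_exp[OF fin_Pi[OF A] fin_Pi[OF B]])
  finally show ?thesis .
qed

lemma exp_union_left:
  fixes F :: "('a \<Rightarrow> bool) \<Rightarrow> real"
  assumes A: "finite A" and B: "finite B" and AB: "A \<inter> B = {}"
    and dF: "\<And>f g. (\<forall>x\<in>A. f x = g x) \<Longrightarrow> F f = F g"
  shows "measure_pmf.expectation (Pi_pmf (A \<union> B) d p) F = measure_pmf.expectation (Pi_pmf A d p) F"
  using exp_union_prod[OF A B AB dF, where G="\<lambda>_. 1::real" and d=d and p=p] by simp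

lemma exp_walks:
  fixes H :: "nat \<Rightarrow> (nat \<times> nat \<Rightarrow> bool) \<Rightarrow> real"
  assumes W: "finite W"
    and dep: "\<And>j f g. j \<in> W \<Longrightarrow> (\<forall>k<n. f (j,k) = g (j,k)) \<Longrightarrow> H j f = H j g"
  shows "measure_pmf.expectation (Pi_pmf (W \<times> {..<n}) d p) (\<lambda>f. \<Prod>j\<in>W. H j f) =
         (\<Prod>j\<in>W. measure_pmf.expectation (Pi_pmf ({j} \<times> {..<n}) d p) (H j))"
  using W dep
proof (induction W rule: finite_induct)
  case empty
  then show ?case by simp
next
  case (insert j W)
  have eq: "insert j W \<times> {..<n} = ({j} \<times> {..<n}) \<union> (W \<times> {..<n})" by auto
  have "measure_pmf.expectation (Pi_pmf (insert j W \<times> {..<n}) d p) (\<lambda>f. \<Prod>j\<in>insert j W. H j f)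
      = measure_pmf.expectation (Pi_pmf (({j} \<times> {..<n}) \<union> (W \<times> {..<n})) d p) (\<lambda>f. H j f * (\<Prod>j\<in>W. H j f))"
    unfolding eq using insert.hyps by simp
  also have "\<dots> = measure_pmf.expectation (Pi_pmf ({j} \<times> {..<n}) d p) (H j) *
                  measure_pmf.expectation (Pi_pmf (W \<times> {..<n}) d p) (\<lambda>f. \<Prod>j\<in>W. H j f)"
  proof (rule exp_union_prod)
    show "finite ({j} \<times> {..<n})" "finite (W \<times> {..<n})" using insert.hyps by auto
    show "{j} \<times> {..<n} \<inter> W \<times> {..<n} = {}" using insert.hyps by auto
    fix f g :: "nat \<times> nat \<Rightarrow> bool"
    show "\<forall>x\<in>{j} \<times> {..<n}. f x = g x \<Longrightarrow> H j f = H j g"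
      by (intro insert.prems) auto
    show "\<forall>x\<in>W \<times> {..<n}. f x = g x \<Longrightarrow> (\<Prod>j\<in>W. H j f) = (\<Prod>j\<in>W. H j g)"
      by (intro prod.cong refl insert.prems) auto
  qed
  also have "measure_pmf.expectation (Pi_pmf (W \<times> {..<n}) d p) (\<lambda>f. \<Prod>j\<in>W. H j f) =
             (\<Prod>j\<in>W. measure_pmf.expectation (Pi_pmf ({j} \<times> {..<n}) d p) (H j))"
    using insert by auto
  finally show ?case using insert.hyps by simp
qed

lemma binom_set: "a \<in> set_pmf (binomial_pmf n q) \<Longrightarrow> 0 \<le> q \<Longrightarrow> q \<le> 1 \<Longrightarrow> a \<le> n"
  by (auto simp: set_pmf_eq pmf_binomial)

lemma two_block:
  fixes \<theta> :: "nat \<Rightarrow> nat \<Rightarrow> real"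
  assumes A: "finite A" and B: "finite B" and AB: "A \<inter> B = {}"
    and cA: "card A = i" and cB: "card B = m"
    and pe: "\<And>x. x \<in> A \<union> B \<Longrightarrow> p x = bernoulli_pmf q" and q: "0 \<le> q" "q \<le> 1"
  shows "measure_pmf.expectation (Pi_pmf (A \<union> B) d p) (\<lambda>f. \<theta> (card {x\<in>A. f x}) (card {x\<in>B. f x})) =
         (\<Sum>a\<le>i. \<Sum>b\<le>m. w i q a * w m q b * \<theta> a b)"
proof -
  define h where "h = (\<lambda>(f::'a \<Rightarrow> bool, g::'a \<Rightarrow> bool) x. if x \<in> A then f x else g x)"
  define cAf where "cAf f = card {x\<in>A. f x}" for f :: "'a \<Rightarrow> bool"
  define cBf where "cBf f = card {x\<in>B. f x}" for f :: "'a \<Rightarrow> bool"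
  have "Pi_pmf (A \<union> B) d p = Pi_pmf (A \<union> B) d (\<lambda>_. bernoulli_pmf q)"
    using pe by (intro Pi_pmf_cong) auto
  also have "\<dots> = map_pmf h (pair_pmf (Pi_pmf A d (\<lambda>_. bernoulli_pmf q)) (Pi_pmf B d (\<lambda>_. bernoulli_pmf q)))"
    unfolding h_def by (rule Pi_pmf_union[OF A B AB])
  finally have P: "Pi_pmf (A \<union> B) d p = \<dots>" .
  have hA: "cAf (h z) = cAf (fst z)" for z
    by (cases z) (auto simp: cAf_def h_def intro!: arg_cong[where f=card])
  have hB: "cBf (h z) = cBf (snd z)" for z
    using AB by (cases z) (auto simp: cBf_def h_def intro!: arg_cong[where f=card])
  have "measure_pmf.expectation (Pi_pmf (A \<union> B) d p) (\<lambda>f. \<theta> (cAf f) (cBf f)) =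
        measure_pmf.expectation (pair_pmf (Pi_pmf A d (\<lambda>_. bernoulli_pmf q)) (Pi_pmf B d (\<lambda>_. bernoulli_pmf q)))
          (\<lambda>z. \<theta> (cAf (fst z)) (cBf (snd z)))"
    unfolding P by (simp add: hA hB)
  also have "\<dots> = measure_pmf.expectation (map_pmf (\<lambda>(f, g). (cAf f, cBf g))
          (pair_pmf (Pi_pmf A d (\<lambda>_. bernoulli_pmf q)) (Pi_pmf B d (\<lambda>_. bernoulli_pmf q)))) (\<lambda>z. \<theta> (fst z) (snd z))"
    by (simp add: case_prod_beta)
  also have "map_pmf (\<lambda>(f, g). (cAf f, cBf g)) (pair_pmf (Pi_pmf A d (\<lambda>_. bernoulli_pmf q)) (Pi_pmf B d (\<lambda>_. bernoulli_pmf q)))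
      = pair_pmf (binomial_pmf i q) (binomial_pmf m q)"
    unfolding map_pair cAf_def cBf_def
    using binomial_pmf_altdef'[OF A cA, of q d] binomial_pmf_altdef'[OF B cB, of q d] q by simp
  also have "measure_pmf.expectation (pair_pmf (binomial_pmf i q) (binomial_pmf m q)) (\<lambda>z. \<theta> (fst z) (snd z))
      = (\<Sum>z\<in>{..i} \<times> {..m}. \<theta> (fst z) (snd z) * pmf (pair_pmf (binomial_pmf i q) (binomial_pmf m q)) z)"
    using q by (intro integral_measure_pmf_real) (auto dest: binom_set)
  also have "\<dots> = (\<Sum>(a,b)\<in>{..i} \<times> {..m}. w i q a * w m q b * \<theta> a b)"
    by (intro sum.cong refl) (auto simp: pmf_pair pmf_binomial q w_def)
  also have "\<dots> = (\<Sum>a\<le>i. \<Sum>b\<le>m. w i q a * w m q b * \<theta> a b)"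
    by (rule sum.cartesian_product[symmetric])
  finally show ?thesis unfolding cAf_def cBf_def .
qed


definition pp :: "(nat \<Rightarrow> real) \<Rightarrow> nat \<times> nat \<Rightarrow> bool pmf" where
  "pp \<alpha> x = bernoulli_pmf (\<alpha> (fst x))"

definition Xc :: "(nat \<times> nat \<Rightarrow> bool) \<Rightarrow> nat \<Rightarrow> nat \<Rightarrow> nat" where
  "Xc f j i = card {k. k < i \<and> f (j, k)}"

lemma card_blk: "card {x\<in>{j} \<times> S. f x} = card {k\<in>S. f (j, k)}"
proof -
  have "{x\<in>{j} \<times> S. f x} = (\<lambda>k. (j, k)) ` {k\<in>S. f (j, k)}" by auto
  then show ?thesis by (simp add: card_image inj_on_def)
qed

lemma Xc_dep: "(\<forall>k'<i. f (j,k') = g (j,k')) \<Longrightarrow> Xc f j i = Xc g j i"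
  unfolding Xc_def by (intro arg_cong[where f=card]) auto

lemma walk_pos_Xc: "walk_pos f j i = (int (Xc f j i), int (i - Xc f j i))"
proof -
  have "{k. k < i \<and> \<not> f (j, k)} = {..<i} - {k. k < i \<and> f (j, k)}" by auto
  moreover have "card ({..<i} - {k. k < i \<and> f (j, k)}) = card {..<i} - card {k. k < i \<and> f (j, k)}"
    by (rule card_Diff_subset) auto
  ultimately have "card {k. k < i \<and> \<not> f (j, k)} = i - Xc f j i"
    unfolding Xc_def by simp
  then show ?thesis unfolding walk_pos_def Xc_def by simp
qed

lemma prod_ind:
  assumes "finite W"
  shows "(if \<forall>j\<in>W. P j then 1 else 0 :: real) = (\<Prod>j\<in>W. if P j then 1 else 0)"
  using assms by (induction W rule: finite_induct) auto

lemma Y_prod: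
  "Y_ind (b1,b2) r i f = (\<Prod>j\<in>{1..r}. visk b1 b2 i (Xc f j i))"
  unfolding Y_ind_def visk_def walk_pos_Xc by (rule prod_ind) simp

lemma single_walk:
  fixes \<phi> \<psi> :: "nat \<Rightarrow> real"
  assumes ik: "i \<le> k" and kN: "k \<le> N" and a: "0 \<le> \<alpha> j" "\<alpha> j \<le> 1"
  shows "measure_pmf.expectation (Pi_pmf ({j} \<times> {..<N}) False (pp \<alpha>)) (\<lambda>f. \<phi> (Xc f j i) * \<psi> (Xc f j k))
       = (\<Sum>a\<le>i. \<Sum>b\<le>k - i. w i (\<alpha> j) a * w (k - i) (\<alpha> j) b * (\<phi> a * \<psi> (a + b)))"
proof -
  define A where "A = {j} \<times> {..<i}"
  define B where "B = {j} \<times> {i..<k}"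
  define C where "C = {j} \<times> {k..<N}"
  have U: "{j} \<times> {..<N} = (A \<union> B) \<union> C" unfolding A_def B_def C_def using ik kN by auto
  have XA: "Xc f j i = card {x\<in>A. f x}" for f
    unfolding Xc_def A_def card_blk by (intro arg_cong[where f=card]) auto
  have XB: "Xc f j k = card {x\<in>A. f x} + card {x\<in>B. f x}" for f
  proof -
    have "{k'. k' < k \<and> f (j,k')} = {k'\<in>{..<i}. f (j,k')} \<union> {k'\<in>{i..<k}. f (j,k')}" using ik by auto
    moreover have "card ({k'\<in>{..<i}. f (j,k')} \<union> {k'\<in>{i..<k}. f (j,k')}) = card {k'\<in>{..<i}. f (j,k')} + card {k'\<in>{i..<k}. f (j,k')}"
      by (rule card_Un_disjoint) auto
    ultimately have "Xc f j k = card {k'\<in>{..<i}. f (j,k')} + card {k'\<in>{i..<k}. f (j,k')}"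
      unfolding Xc_def by simp
    then show ?thesis unfolding A_def B_def card_blk .
  qed
  have "measure_pmf.expectation (Pi_pmf ({j} \<times> {..<N}) False (pp \<alpha>)) (\<lambda>f. \<phi> (Xc f j i) * \<psi> (Xc f j k))
      = measure_pmf.expectation (Pi_pmf (A \<union> B) False (pp \<alpha>)) (\<lambda>f. \<phi> (Xc f j i) * \<psi> (Xc f j k))"
    unfolding U
  proof (rule exp_union_left)
    show "finite (A \<union> B)" "finite C" unfolding A_def B_def C_def by auto
    show "(A \<union> B) \<inter> C = {}" unfolding A_def B_def C_def using ik by auto
    fix f g :: "nat \<times> nat \<Rightarrow> bool" assume fg: "\<forall>x\<in>A \<union> B. f x = g x"
    have "Xc f j i = Xc g j i" using fg ik unfolding A_def by (intro Xc_dep) auto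
    moreover have "Xc f j k = Xc g j k" using fg unfolding A_def B_def by (intro Xc_dep) auto
    ultimately show "\<phi> (Xc f j i) * \<psi> (Xc f j k) = \<phi> (Xc g j i) * \<psi> (Xc g j k)" by simp
  qed
  also have "\<dots> = measure_pmf.expectation (Pi_pmf (A \<union> B) False (pp \<alpha>))
                     (\<lambda>f. (\<lambda>a b. \<phi> a * \<psi> (a + b)) (card {x\<in>A. f x}) (card {x\<in>B. f x}))"
    by (simp add: XA XB)
  also have "\<dots> = (\<Sum>a\<le>i. \<Sum>b\<le>k - i. w i (\<alpha> j) a * w (k - i) (\<alpha> j) b * (\<phi> a * \<psi> (a + b)))"
  proof (rule two_block)
    show "finite A" "finite B" "A \<inter> B = {}" unfolding A_def B_def by auto
    show "card A = i" "card B = k - i" unfolding A_def B_def by (simp_all add: card_cartesian_product)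
    show "\<And>x. x \<in> A \<union> B \<Longrightarrow> pp \<alpha> x = bernoulli_pmf (\<alpha> j)" unfolding A_def B_def pp_def by auto
  qed (use a in auto)
  finally show ?thesis .
qed

lemma cov_core:
  fixes wt \<phi> g :: "nat \<Rightarrow> real"
  assumes wn: "\<And>a. 0 \<le> wt a" and ws: "(\<Sum>a\<le>i. wt a) = 1"
    and ph: "\<And>a. 0 \<le> \<phi> a \<and> \<phi> a \<le> 1" and gb: "\<And>a. 0 \<le> g a \<and> g a \<le> 1"
    and gc: "\<And>a. a \<le> i \<Longrightarrow> \<bar>g a - c\<bar> \<le> \<delta>"
  shows "\<bar>(\<Sum>a\<le>i. wt a * \<phi> a * g a) - (\<Sum>a\<le>i. wt a * \<phi> a) * (\<Sum>a\<le>i. wt a * g a)\<bar> \<le> 2 * \<delta>"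
    and "0 \<le> (\<Sum>a\<le>i. wt a * \<phi> a * g a) \<and> (\<Sum>a\<le>i. wt a * \<phi> a * g a) \<le> 1"
    and "0 \<le> (\<Sum>a\<le>i. wt a * \<phi> a) * (\<Sum>a\<le>i. wt a * g a) \<and> (\<Sum>a\<le>i. wt a * \<phi> a) * (\<Sum>a\<le>i. wt a * g a) \<le> 1"
proof -
  define E1 where "E1 = (\<Sum>a\<le>i. wt a * \<phi> a)"
  define D1 where "D1 = (\<Sum>a\<le>i. wt a * \<phi> a * (g a - c))"
  define D2 where "D2 = (\<Sum>a\<le>i. wt a * (g a - c))"
  have bnd01: "0 \<le> (\<Sum>a\<le>i. wt a * h a) \<and> (\<Sum>a\<le>i. wt a * h a) \<le> 1" if h: "\<And>a. 0 \<le> h a \<and> h a \<le> 1" for h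
  proof
    show "0 \<le> (\<Sum>a\<le>i. wt a * h a)" using wn h by (intro sum_nonneg) auto
    have "(\<Sum>a\<le>i. wt a * h a) \<le> (\<Sum>a\<le>i. wt a)" using wn h by (intro sum_mono) (simp add: mult_left_le)
    then show "(\<Sum>a\<le>i. wt a * h a) \<le> 1" using ws by simp
  qed
  have E1b: "0 \<le> E1 \<and> E1 \<le> 1" unfolding E1_def using bnd01[OF ph] .
  have Egb: "0 \<le> (\<Sum>a\<le>i. wt a * g a) \<and> (\<Sum>a\<le>i. wt a * g a) \<le> 1" using bnd01[OF gb] .
  have pg: "\<And>a. 0 \<le> \<phi> a * g a \<and> \<phi> a * g a \<le> 1" using ph gb by (simp add: mult_le_one)
  show "0 \<le> (\<Sum>a\<le>i. wt a * \<phi> a * g a) \<and> (\<Sum>a\<le>i. wt a * \<phi> a * g a) \<le> 1"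
    using bnd01[OF pg] by (simp add: mult.assoc)
  show "0 \<le> (\<Sum>a\<le>i. wt a * \<phi> a) * (\<Sum>a\<le>i. wt a * g a) \<and> (\<Sum>a\<le>i. wt a * \<phi> a) * (\<Sum>a\<le>i. wt a * g a) \<le> 1"
    using E1b Egb unfolding E1_def by (simp add: mult_le_one)
  have d0: "0 \<le> \<delta>" using gc[of 0] by simp
  have e1: "(\<Sum>a\<le>i. wt a * \<phi> a * g a) = c * E1 + D1"
    unfolding E1_def D1_def by (simp add: sum_distrib_left algebra_simps sum.distrib[symmetric])
  have e2: "(\<Sum>a\<le>i. wt a * g a) = c + D2"
  proof -
    have "(\<Sum>a\<le>i. wt a * g a) = (\<Sum>a\<le>i. c * wt a + wt a * (g a - c))" by (simp add: algebra_simps)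
    also have "\<dots> = c * (\<Sum>a\<le>i. wt a) + D2" unfolding D2_def by (simp add: sum.distrib sum_distrib_left)
    finally show ?thesis using ws by simp
  qed
  have D1b: "\<bar>D1\<bar> \<le> \<delta>"
  proof -
    have "\<bar>D1\<bar> \<le> (\<Sum>a\<le>i. \<bar>wt a * \<phi> a * (g a - c)\<bar>)" unfolding D1_def by (rule sum_abs)
    also have "\<dots> \<le> (\<Sum>a\<le>i. wt a * \<delta>)"
    proof (rule sum_mono)
      fix a assume "a \<in> {..i}"
      then have "\<bar>g a - c\<bar> \<le> \<delta>" using gc by simp
      then have "\<phi> a * \<bar>g a - c\<bar> \<le> 1 * \<delta>" using ph[of a] d0 by (intro mult_mono) auto
      then show "\<bar>wt a * \<phi> a * (g a - c)\<bar> \<le> wt a * \<delta>"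
        using wn[of a] ph[of a] by (simp add: abs_mult mult.assoc mult_left_mono)
    qed
    also have "\<dots> = \<delta>" using ws by (simp add: sum_distrib_right[symmetric])
    finally show ?thesis .
  qed
  have D2b: "\<bar>D2\<bar> \<le> \<delta>"
  proof -
    have "\<bar>D2\<bar> \<le> (\<Sum>a\<le>i. \<bar>wt a * (g a - c)\<bar>)" unfolding D2_def by (rule sum_abs)
    also have "\<dots> \<le> (\<Sum>a\<le>i. wt a * \<delta>)"
      using wn gc by (intro sum_mono) (simp add: abs_mult mult_left_mono)
    also have "\<dots> = \<delta>" using ws by (simp add: sum_distrib_right[symmetric])
    finally show ?thesis .
  qed
  have "(\<Sum>a\<le>i. wt a * \<phi> a * g a) - E1 * (\<Sum>a\<le>i. wt a * g a) = D1 - E1 * D2"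
    unfolding e1 e2 by (simp add: algebra_simps)
  moreover have "\<bar>D1 - E1 * D2\<bar> \<le> 2 * \<delta>"
  proof -
    have "\<bar>E1\<bar> * \<bar>D2\<bar> \<le> 1 * \<delta>" using E1b D2b by (intro mult_mono) auto
    then have "\<bar>E1 * D2\<bar> \<le> \<delta>" by (simp add: abs_mult)
    then show ?thesis using D1b by linarith
  qed
  ultimately show "\<bar>(\<Sum>a\<le>i. wt a * \<phi> a * g a) - (\<Sum>a\<le>i. wt a * \<phi> a) * (\<Sum>a\<le>i. wt a * g a)\<bar> \<le> 2 * \<delta>"
    unfolding E1_def by simp
qed

lemma prod_diff_bound:
  fixes x y :: "nat \<Rightarrow> real"
  assumes "finite W" "\<And>j. j \<in> W \<Longrightarrow> 0 \<le> x j \<and> x j \<le> 1" "\<And>j. j \<in> W \<Longrightarrow> 0 \<le> y j \<and> y j \<le> 1"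
  shows "\<bar>(\<Prod>j\<in>W. x j) - (\<Prod>j\<in>W. y j)\<bar> \<le> (\<Sum>j\<in>W. \<bar>x j - y j\<bar>)"
  using assms
proof (induction W rule: finite_induct)
  case empty then show ?case by simp
next
  case (insert j W)
  define X where "X = (\<Prod>j\<in>W. x j)"
  define Y where "Y = (\<Prod>j\<in>W. y j)"
  have Xb: "0 \<le> X \<and> X \<le> 1" unfolding X_def using insert.prems(1)
    by (auto intro!: prod_nonneg prod_le_1)
  have IH: "\<bar>X - Y\<bar> \<le> (\<Sum>j\<in>W. \<bar>x j - y j\<bar>)" unfolding X_def Y_def using insert by auto
  have yj: "0 \<le> y j \<and> y j \<le> 1" using insert.prems(2) by simp
  have "x j * X - y j * Y = (x j - y j) * X + y j * (X - Y)" by (simp add: algebra_simps)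
  then have "\<bar>x j * X - y j * Y\<bar> \<le> \<bar>x j - y j\<bar> * \<bar>X\<bar> + \<bar>y j\<bar> * \<bar>X - Y\<bar>"
    by (metis abs_mult abs_triangle_ineq)
  also have "\<dots> \<le> \<bar>x j - y j\<bar> * 1 + 1 * \<bar>X - Y\<bar>"
    using Xb yj by (intro add_mono mult_mono) auto
  finally have "\<bar>x j * X - y j * Y\<bar> \<le> \<bar>x j - y j\<bar> + (\<Sum>j\<in>W. \<bar>x j - y j\<bar>)" using IH by simp
  then show ?case using insert.hyps unfolding X_def Y_def by simp
qed


lemma exp01:
  fixes F :: "'a \<Rightarrow> real"
  assumes fin: "finite (set_pmf P)" and b: "\<And>x. 0 \<le> F x \<and> F x \<le> 1"
  shows "0 \<le> measure_pmf.expectation P F \<and> measure_pmf.expectation P F \<le> 1"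
proof -
  have e: "measure_pmf.expectation P F = (\<Sum>x\<in>set_pmf P. F x * pmf P x)" by (rule exp_sum_pmf[OF fin])
  have "(\<Sum>x\<in>set_pmf P. F x * pmf P x) \<le> (\<Sum>x\<in>set_pmf P. pmf P x)"
    using b by (intro sum_mono) (simp add: mult_left_le_one_le)
  also have "\<dots> = 1" using fin by (intro sum_pmf_eq_1) auto
  finally show ?thesis unfolding e using b by (auto intro!: sum_nonneg)
qed

lemma var_formula:
  fixes Y :: "nat \<Rightarrow> 'a \<Rightarrow> real"
  assumes fin: "finite (set_pmf P)"
  shows "measure_pmf.expectation P (\<lambda>x. ((1 / real n) * (\<Sum>i=1..n. Y i x) -
            measure_pmf.expectation P (\<lambda>x. (1 / real n) * (\<Sum>i=1..n. Y i x)))\<^sup>2)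
       = (1 / real n)\<^sup>2 * (\<Sum>i=1..n. \<Sum>k=1..n. measure_pmf.expectation P (\<lambda>x. Y i x * Y k x)
              - measure_pmf.expectation P (Y i) * measure_pmf.expectation P (Y k))"
proof -
  define S where "S = set_pmf P"
  define \<pi> where "\<pi> = pmf P"
  define c where "c = 1 / real n"
  define R where "R x = c * (\<Sum>i=1..n. Y i x)" for x
  have fS: "finite S" unfolding S_def by (rule fin)
  have E: "measure_pmf.expectation P F = (\<Sum>x\<in>S. F x * \<pi> x)" for F :: "'a \<Rightarrow> real"
    unfolding S_def \<pi>_def by (rule exp_sum_pmf[OF fin])
  have s1: "(\<Sum>x\<in>S. \<pi> x) = 1" unfolding S_def \<pi>_def using fin by (intro sum_pmf_eq_1) auto
  define \<mu> where "\<mu> = (\<Sum>x\<in>S. R x * \<pi> x)"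
  have "(\<Sum>x\<in>S. (R x - \<mu>)\<^sup>2 * \<pi> x) = (\<Sum>x\<in>S. R x * R x * \<pi> x - 2 * \<mu> * (R x * \<pi> x) + \<mu> * \<mu> * \<pi> x)"
    by (intro sum.cong refl) (simp add: power2_eq_square algebra_simps)
  also have "\<dots> = (\<Sum>x\<in>S. R x * R x * \<pi> x) - 2 * \<mu> * \<mu> + \<mu> * \<mu> * (\<Sum>x\<in>S. \<pi> x)"
    unfolding \<mu>_def by (simp add: sum.distrib sum_subtractf sum_distrib_left)
  also have "\<dots> = (\<Sum>x\<in>S. R x * R x * \<pi> x) - \<mu> * \<mu>" using s1 by simp
  also have "(\<Sum>x\<in>S. R x * R x * \<pi> x) = c\<^sup>2 * (\<Sum>i=1..n. \<Sum>k=1..n. \<Sum>x\<in>S. Y i x * Y k x * \<pi> x)"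
  proof -
    have "(\<Sum>x\<in>S. R x * R x * \<pi> x) = (\<Sum>x\<in>S. c\<^sup>2 * (\<Sum>i=1..n. \<Sum>k=1..n. Y i x * Y k x * \<pi> x))"
    proof (intro sum.cong refl)
      fix x
      have pr0: "(\<Sum>i=1..n. Y i x) * (\<Sum>k=1..n. Y k x) = (\<Sum>i=1..n. \<Sum>k=1..n. Y i x * Y k x)"
        by (rule sum_product)
      have pr: "(\<Sum>i=1..n. Y i x) * (\<Sum>k=1..n. Y k x) * \<pi> x = (\<Sum>i=1..n. \<Sum>k=1..n. Y i x * Y k x * \<pi> x)"
        unfolding pr0 by (simp add: sum_distrib_right)
      have "R x * R x * \<pi> x = c\<^sup>2 * ((\<Sum>i=1..n. Y i x) * (\<Sum>k=1..n. Y k x) * \<pi> x)"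
        unfolding R_def by (simp add: power2_eq_square mult.assoc mult.left_commute)
      also have "\<dots> = c\<^sup>2 * (\<Sum>i=1..n. \<Sum>k=1..n. Y i x * Y k x * \<pi> x)" by (simp only: pr)
      finally show "R x * R x * \<pi> x = c\<^sup>2 * (\<Sum>i=1..n. \<Sum>k=1..n. Y i x * Y k x * \<pi> x)" .
    qed
    also have "\<dots> = c\<^sup>2 * (\<Sum>x\<in>S. \<Sum>i=1..n. \<Sum>k=1..n. Y i x * Y k x * \<pi> x)" by (simp add: sum_distrib_left)
    also have "(\<Sum>x\<in>S. \<Sum>i=1..n. \<Sum>k=1..n. Y i x * Y k x * \<pi> x) = (\<Sum>i=1..n. \<Sum>k=1..n. \<Sum>x\<in>S. Y i x * Y k x * \<pi> x)"
      by (subst sum.swap) (simp add: sum.swap[of _ S])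
    finally show ?thesis .
  qed
  also have "\<mu> * \<mu> = c\<^sup>2 * (\<Sum>i=1..n. \<Sum>k=1..n. (\<Sum>x\<in>S. Y i x * \<pi> x) * (\<Sum>x\<in>S. Y k x * \<pi> x))"
  proof -
    have "\<mu> = c * (\<Sum>i=1..n. \<Sum>x\<in>S. Y i x * \<pi> x)"
      unfolding \<mu>_def R_def by (simp add: sum_distrib_left sum_distrib_right sum.swap[of _ S] algebra_simps)
    then show ?thesis by (simp add: power2_eq_square sum_product algebra_simps)
  qed
  finally have main: "(\<Sum>x\<in>S. (R x - \<mu>)\<^sup>2 * \<pi> x) = c\<^sup>2 * (\<Sum>i=1..n. \<Sum>k=1..n. (\<Sum>x\<in>S. Y i x * Y k x * \<pi> x) - (\<Sum>x\<in>S. Y i x * \<pi> x) * (\<Sum>x\<in>S. Y k x * \<pi> x))"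
    by (simp add: sum_subtractf right_diff_distrib)
  show ?thesis unfolding E c_def[symmetric] R_def[symmetric, unfolded c_def[symmetric]]
    using main unfolding \<mu>_def by (simp add: R_def)
qed

lemma sym_sum:
  fixes c :: "nat \<Rightarrow> nat \<Rightarrow> real"
  assumes fS: "finite S" and sym: "\<And>i k. c i k = c k i"
  shows "(\<Sum>i\<in>S. \<Sum>k\<in>S. c i k) = (\<Sum>i\<in>S. c i i) + 2 * (\<Sum>i\<in>S. \<Sum>k\<in>S. if i < k then c i k else 0)"
proof -
  have split: "c i k = (if i < k then c i k else 0) + (if i = k then c i k else 0) + (if k < i then c i k else 0)" for i k
    by auto
  have "(\<Sum>i\<in>S. \<Sum>k\<in>S. c i k) = (\<Sum>i\<in>S. \<Sum>k\<in>S. if i < k then c i k else 0) + (\<Sum>i\<in>S. \<Sum>k\<in>S. if i = k then c i k else 0)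
       + (\<Sum>i\<in>S. \<Sum>k\<in>S. if k < i then c i k else 0)"
    by (subst split) (simp add: sum.distrib)
  also have "(\<Sum>i\<in>S. \<Sum>k\<in>S. if i = k then c i k else 0) = (\<Sum>i\<in>S. c i i)"
    using fS by (intro sum.cong refl) (simp add: sum.delta)
  also have "(\<Sum>i\<in>S. \<Sum>k\<in>S. if k < i then c i k else 0) = (\<Sum>k\<in>S. \<Sum>i\<in>S. if k < i then c i k else 0)"
    by (rule sum.swap)
  also have "\<dots> = (\<Sum>i\<in>S. \<Sum>k\<in>S. if i < k then c i k else 0)"
    by (intro sum.cong refl) (metis sym)
  finally show ?thesis by simp
qed

lemma sqrt_sum: "(\<Sum>d=1..N. 1 / sqrt (real d)) \<le> 2 * sqrt (real N)"
proof (induction N)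
  case 0 then show ?case by simp
next
  case (Suc N)
  define s where "s = sqrt (real (Suc N))"
  define t where "t = sqrt (real N)"
  have s0: "s > 0" unfolding s_def by simp
  have ts: "t \<le> s" unfolding s_def t_def by simp
  have t0: "0 \<le> t" unfolding t_def by simp
  have "s * s - t * t = 1" unfolding s_def t_def by simp
  then have "2 * (s - t) * s \<ge> 1"
  proof -
    have "0 \<le> (s - t)\<^sup>2" by simp
    then have "2 * t * s \<le> t * t + s * s" by (simp add: power2_eq_square algebra_simps)
    then show ?thesis using \<open>s * s - t * t = 1\<close> by (simp add: algebra_simps)
  qed
  then have "1 / s \<le> 2 * (s - t)" using s0 by (simp add: field_simps)
  then have "1 / sqrt (real (Suc N)) \<le> 2 * sqrt (real (Suc N)) - 2 * sqrt (real N)"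
    unfolding s_def t_def by (simp add: algebra_simps)
  then show ?case using Suc by simp
qed

lemma final_sum_bound:
  fixes c :: "nat \<Rightarrow> nat \<Rightarrow> real"
  assumes sym: "\<And>i k. c i k = c k i" and diag: "\<And>i. \<bar>c i i\<bar> \<le> 1"
    and off: "\<And>i k. 1 \<le> i \<Longrightarrow> i < k \<Longrightarrow> k \<le> n \<Longrightarrow> \<bar>c i k\<bar> \<le> Q / sqrt (real (k - i))"
    and Q: "Q \<ge> 0"
  shows "\<bar>\<Sum>i=1..n. \<Sum>k=1..n. c i k\<bar> \<le> real n + 4 * Q * real n * sqrt (real n)"
proof -
  have "\<bar>\<Sum>i=1..n. \<Sum>k=1..n. c i k\<bar> \<le> \<bar>\<Sum>i=1..n. c i i\<bar> + 2 * \<bar>\<Sum>i=1..n. \<Sum>k=1..n. if i < k then c i k else 0\<bar>"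
    by (subst sym_sum[OF _ sym]) (auto intro: order.trans[OF abs_triangle_ineq] simp: abs_mult)
  also have "\<bar>\<Sum>i=1..n. c i i\<bar> \<le> real n"
  proof -
    have "\<bar>\<Sum>i=1..n. c i i\<bar> \<le> (\<Sum>i=1..n. \<bar>c i i\<bar>)" by (rule sum_abs)
    also have "\<dots> \<le> (\<Sum>i=1..n. 1)" using diag by (intro sum_mono) auto
    finally show ?thesis by simp
  qed
  also have "\<bar>\<Sum>i=1..n. \<Sum>k=1..n. if i < k then c i k else 0\<bar> \<le> (\<Sum>i=1..n. 2 * Q * sqrt (real n))"
  proof -
    have "\<bar>\<Sum>i=1..n. \<Sum>k=1..n. if i < k then c i k else 0\<bar> \<le> (\<Sum>i=1..n. \<bar>\<Sum>k=1..n. if i < k then c i k else 0\<bar>)"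
      by (rule sum_abs)
    also have "\<dots> \<le> (\<Sum>i=1..n. 2 * Q * sqrt (real n))"
    proof (rule sum_mono)
      fix i assume i: "i \<in> {1..n}"
      have "\<bar>\<Sum>k=1..n. if i < k then c i k else 0\<bar> \<le> (\<Sum>k=1..n. \<bar>if i < k then c i k else 0\<bar>)" by (rule sum_abs)
      also have "\<dots> \<le> (\<Sum>k=1..n. if i < k then Q / sqrt (real (k - i)) else 0)"
        using off i by (intro sum_mono) auto
      also have "\<dots> = (\<Sum>k=1..n. if k \<in> {k. i < k} then Q / sqrt (real (k - i)) else 0)"
        by simp
      also have "\<dots> = (\<Sum>k\<in>{1..n} \<inter> {k. i < k}. Q / sqrt (real (k - i)))"
        by (rule sum.inter_restrict[symmetric]) simp
      also have "{1..n} \<inter> {k. i < k} = {1 + i..(n - i) + i}" using i by auto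
      also have "(\<Sum>k\<in>{1 + i..(n - i) + i}. Q / sqrt (real (k - i))) = (\<Sum>d=1..n - i. Q / sqrt (real d))"
        by (subst sum.shift_bounds_cl_nat_ivl) simp
      also have "\<dots> = Q * (\<Sum>d=1..n - i. 1 / sqrt (real d))" by (simp add: sum_distrib_left)
      also have "\<dots> \<le> Q * (2 * sqrt (real (n - i)))" using Q sqrt_sum by (intro mult_left_mono) auto
      also have "\<dots> \<le> Q * (2 * sqrt (real n))" using Q by (intro mult_left_mono) auto
      finally show "\<bar>\<Sum>k=1..n. if i < k then c i k else 0\<bar> \<le> 2 * Q * sqrt (real n)" by simp
    qed
    finally show ?thesis .
  qed
  finally show ?thesis by (simp add: algebra_simps)
qed


lemma visk01: "0 \<le> visk b1 b2 k x \<and> visk b1 b2 k x \<le> 1"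
  by (simp add: visk_def)

lemma rearr:
  fixes wi wm \<phi> \<psi> :: "nat \<Rightarrow> real"
  shows "(\<Sum>a\<le>i. \<Sum>b\<le>m. wi a * wm b * (\<phi> a * \<psi> (a + b))) = (\<Sum>a\<le>i. wi a * \<phi> a * (\<Sum>b\<le>m. wm b * \<psi> (a + b)))"
  by (intro sum.cong refl) (simp add: sum_distrib_left algebra_simps)

lemma cov_pair:
  fixes b1 b2 r :: nat and \<alpha> :: "nat \<Rightarrow> real" and A0 :: real
  assumes b1: "b1 \<ge> 1" and b12: "b1 \<le> b2" and g: "coprime b1 b2"
    and ab: "\<forall>j\<in>{1..r}. 0 < \<alpha> j \<and> \<alpha> j < 1"
    and A0: "A0 > 0" and A0le: "\<forall>j\<in>{1..r}. A0 \<le> \<alpha> j * (1 - \<alpha> j)"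
    and ik: "i < k" and kn: "k \<le> n"
  shows "\<bar>measure_pmf.expectation (Pi_pmf ({1..r} \<times> {..<n}) False (pp \<alpha>)) (\<lambda>f. Y_ind (b1,b2) r i f * Y_ind (b1,b2) r k f)
         - measure_pmf.expectation (Pi_pmf ({1..r} \<times> {..<n}) False (pp \<alpha>)) (Y_ind (b1,b2) r i)
         * measure_pmf.expectation (Pi_pmf ({1..r} \<times> {..<n}) False (pp \<alpha>)) (Y_ind (b1,b2) r k)\<bar>
         \<le> real r * (2 * ((2 ^ card (Sset b1 k) + 1) * (8 / sqrt (A0 * real (k - i)))))"
proof -
  define m where "m = k - i"
  define \<delta> where "\<delta> = (2 ^ card (Sset b1 k) + 1) * (8 / sqrt (A0 * real m))"
  define PP where "PP = Pi_pmf ({1..r} \<times> {..<n}) False (pp \<alpha>)"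
  define Pj where "Pj j = Pi_pmf ({j} \<times> {..<n}) False (pp \<alpha>)" for j
  define \<phi> where "\<phi> = visk b1 b2 i"
  define gj where "gj j a = (\<Sum>b\<le>m. w m (\<alpha> j) b * visk b1 b2 k (a + b))" for j a
  define eik where "eik j = (\<Sum>a\<le>i. w i (\<alpha> j) a * \<phi> a * gj j a)" for j
  define ei where "ei j = (\<Sum>a\<le>i. w i (\<alpha> j) a * \<phi> a)" for j
  define ek where "ek j = (\<Sum>a\<le>i. w i (\<alpha> j) a * gj j a)" for j
  have m1: "m \<ge> 1" unfolding m_def using ik by simp
  have aj: "0 \<le> \<alpha> j" "\<alpha> j \<le> 1" if "j \<in> {1..r}" for j
  proof -
    have "0 < \<alpha> j \<and> \<alpha> j < 1" using ab that by blast
    then show "0 \<le> \<alpha> j" "\<alpha> j \<le> 1" by auto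
  qed
  have ikl: "i \<le> k" using ik by simp
  have Eik: "measure_pmf.expectation (Pj j) (\<lambda>f. \<phi> (Xc f j i) * visk b1 b2 k (Xc f j k)) = eik j"
    if j: "j \<in> {1..r}" for j
    unfolding Pj_def eik_def gj_def m_def using single_walk[where \<alpha>=\<alpha> and j=j, OF ikl kn aj[OF j], of \<phi> "visk b1 b2 k"]
    by (simp add: rearr)
  have Ei: "measure_pmf.expectation (Pj j) (\<lambda>f. \<phi> (Xc f j i)) = ei j" if j: "j \<in> {1..r}" for j
  proof -
    have "measure_pmf.expectation (Pj j) (\<lambda>f. \<phi> (Xc f j i)) = measure_pmf.expectation (Pj j) (\<lambda>f. \<phi> (Xc f j i) * (\<lambda>_. 1) (Xc f j k))"
      by simp
    also have "\<dots> = (\<Sum>a\<le>i. w i (\<alpha> j) a * \<phi> a * (\<Sum>b\<le>m. w m (\<alpha> j) b * 1))"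
      unfolding Pj_def m_def using single_walk[where \<alpha>=\<alpha> and j=j, OF ikl kn aj[OF j], of \<phi> "\<lambda>_. 1"]
        rearr[where wi="w i (\<alpha> j)" and wm="w (k - i) (\<alpha> j)" and \<phi>=\<phi> and \<psi>="\<lambda>_. 1"] by (simp only:)
    also have "\<dots> = ei j" unfolding ei_def by (simp add: w_sum)
    finally show ?thesis .
  qed
  have Ek: "measure_pmf.expectation (Pj j) (\<lambda>f. visk b1 b2 k (Xc f j k)) = ek j" if j: "j \<in> {1..r}" for j
  proof -
    have "measure_pmf.expectation (Pj j) (\<lambda>f. visk b1 b2 k (Xc f j k)) = measure_pmf.expectation (Pj j) (\<lambda>f. (\<lambda>_. 1) (Xc f j i) * visk b1 b2 k (Xc f j k))"
      by simp
    also have "\<dots> = (\<Sum>a\<le>i. w i (\<alpha> j) a * 1 * gj j a)"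
      unfolding Pj_def m_def gj_def using single_walk[where \<alpha>=\<alpha> and j=j, OF ikl kn aj[OF j], of "\<lambda>_. 1" "visk b1 b2 k"]
        rearr[where wi="w i (\<alpha> j)" and wm="w (k - i) (\<alpha> j)" and \<phi>="\<lambda>_. 1" and \<psi>="visk b1 b2 k"] by (simp only:)
    also have "\<dots> = ek j" unfolding ek_def by simp
    finally show ?thesis .
  qed
  have depi: "Xc f j i = Xc g j i" "Xc f j k = Xc g j k" if "\<forall>k'<n. f (j,k') = g (j,k')" for f g j
    using that ik kn by (auto intro!: Xc_dep)
  have EYY: "measure_pmf.expectation PP (\<lambda>f. Y_ind (b1,b2) r i f * Y_ind (b1,b2) r k f) = (\<Prod>j\<in>{1..r}. eik j)"
  proof -
    have "measure_pmf.expectation PP (\<lambda>f. Y_ind (b1,b2) r i f * Y_ind (b1,b2) r k f)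
        = measure_pmf.expectation PP (\<lambda>f. \<Prod>j\<in>{1..r}. \<phi> (Xc f j i) * visk b1 b2 k (Xc f j k))"
      unfolding Y_prod \<phi>_def by (simp add: prod.distrib)
    also have "\<dots> = (\<Prod>j\<in>{1..r}. measure_pmf.expectation (Pj j) (\<lambda>f. \<phi> (Xc f j i) * visk b1 b2 k (Xc f j k)))"
      unfolding PP_def Pj_def by (rule exp_walks[OF finite_atLeastAtMost]) (metis depi)
    also have "\<dots> = (\<Prod>j\<in>{1..r}. eik j)" by (intro prod.cong refl Eik)
    finally show ?thesis .
  qed
  have EYi: "measure_pmf.expectation PP (Y_ind (b1,b2) r i) = (\<Prod>j\<in>{1..r}. ei j)"
  proof -
    have "measure_pmf.expectation PP (Y_ind (b1,b2) r i) = measure_pmf.expectation PP (\<lambda>f. \<Prod>j\<in>{1..r}. \<phi> (Xc f j i))"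
      unfolding Y_prod \<phi>_def by simp
    also have "\<dots> = (\<Prod>j\<in>{1..r}. measure_pmf.expectation (Pj j) (\<lambda>f. \<phi> (Xc f j i)))"
      unfolding PP_def Pj_def by (rule exp_walks[OF finite_atLeastAtMost]) (metis depi)
    also have "\<dots> = (\<Prod>j\<in>{1..r}. ei j)" by (intro prod.cong refl Ei)
    finally show ?thesis .
  qed
  have EYk: "measure_pmf.expectation PP (Y_ind (b1,b2) r k) = (\<Prod>j\<in>{1..r}. ek j)"
  proof -
    have "measure_pmf.expectation PP (Y_ind (b1,b2) r k) = measure_pmf.expectation PP (\<lambda>f. \<Prod>j\<in>{1..r}. visk b1 b2 k (Xc f j k))"
      unfolding Y_prod by simp
    also have "\<dots> = (\<Prod>j\<in>{1..r}. measure_pmf.expectation (Pj j) (\<lambda>f. visk b1 b2 k (Xc f j k)))"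
      unfolding PP_def Pj_def by (rule exp_walks[OF finite_atLeastAtMost]) (metis depi)
    also have "\<dots> = (\<Prod>j\<in>{1..r}. ek j)" by (intro prod.cong refl Ek)
    finally show ?thesis .
  qed
  have per: "\<bar>eik j - ei j * ek j\<bar> \<le> 2 * \<delta>"
    and b1': "0 \<le> eik j \<and> eik j \<le> 1" and b2': "0 \<le> ei j * ek j \<and> ei j * ek j \<le> 1"
    if j: "j \<in> {1..r}" for j
  proof -
    have a: "0 < \<alpha> j" "\<alpha> j < 1" using ab j by auto
    define \<delta>j where "\<delta>j = (2 ^ card (Sset b1 k) + 1) * (8 / sqrt (\<alpha> j * (1 - \<alpha> j) * real m))"
    have gc: "\<bar>gj j a - ck b1 b2 k\<bar> \<le> \<delta>j" if "a \<le> i" for a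
      unfolding gj_def \<delta>j_def m_def using g_close[OF b1 b12 g a ik that] .
    have gb: "0 \<le> gj j a \<and> gj j a \<le> 1" for a
    proof -
      have "0 \<le> gj j a" unfolding gj_def using a visk01 by (intro sum_nonneg mult_nonneg_nonneg w_nonneg) auto
      moreover have "gj j a \<le> (\<Sum>b\<le>m. w m (\<alpha> j) b)" unfolding gj_def using a visk01
        by (intro sum_mono) (simp add: mult_left_le w_nonneg)
      ultimately show ?thesis by (simp add: w_sum)
    qed
    note cc = cov_core[of "w i (\<alpha> j)" i \<phi> "gj j" "ck b1 b2 k" \<delta>j]
    have cc': "\<bar>eik j - ei j * ek j\<bar> \<le> 2 * \<delta>j" "0 \<le> eik j \<and> eik j \<le> 1" "0 \<le> ei j * ek j \<and> ei j * ek j \<le> 1"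
      using cc[OF _ w_sum _ gb gc] a unfolding eik_def ei_def ek_def \<phi>_def by (auto simp: w_nonneg visk01)
    have "\<delta>j \<le> \<delta>"
    proof -
      have "A0 * real m \<le> \<alpha> j * (1 - \<alpha> j) * real m" using A0le j by (intro mult_right_mono) auto
      moreover have "0 < A0 * real m" using A0 m1 by simp
      ultimately have "8 / sqrt (\<alpha> j * (1 - \<alpha> j) * real m) \<le> 8 / sqrt (A0 * real m)"
        by (intro divide_left_mono) auto
      then show ?thesis unfolding \<delta>j_def \<delta>_def by (intro mult_left_mono) auto
    qed
    then show "\<bar>eik j - ei j * ek j\<bar> \<le> 2 * \<delta>" using cc'(1) by simp
    show "0 \<le> eik j \<and> eik j \<le> 1" by (rule cc'(2))
    show "0 \<le> ei j * ek j \<and> ei j * ek j \<le> 1" by (rule cc'(3))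
  qed
  have "\<bar>(\<Prod>j\<in>{1..r}. eik j) - (\<Prod>j\<in>{1..r}. ei j) * (\<Prod>j\<in>{1..r}. ek j)\<bar>
      = \<bar>(\<Prod>j\<in>{1..r}. eik j) - (\<Prod>j\<in>{1..r}. ei j * ek j)\<bar>" by (simp add: prod.distrib)
  also have "\<dots> \<le> (\<Sum>j\<in>{1..r}. \<bar>eik j - ei j * ek j\<bar>)"
  proof (rule prod_diff_bound)
    show "finite {1..r}" by simp
    fix j assume j: "j \<in> {1..r}"
    show "0 \<le> eik j \<and> eik j \<le> 1" by (rule b1'[OF j])
    show "0 \<le> ei j * ek j \<and> ei j * ek j \<le> 1" by (rule b2'[OF j])
  qed
  also have "\<dots> \<le> (\<Sum>j\<in>{1..r}. 2 * \<delta>)" by (intro sum_mono per) auto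
  also have "\<dots> = real r * (2 * \<delta>)" by simp
  finally show ?thesis unfolding EYY[unfolded PP_def] EYi[unfolded PP_def] EYk[unfolded PP_def] \<delta>_def m_def .
qed


theorem proposition4p2:
  fixes b1 b2 r :: nat and \<alpha> :: "nat \<Rightarrow> real" and \<epsilon> :: real
  assumes "b1 \<ge> 1" and "gcd b1 b2 = 1" and "b1 \<le> b2"
    and "r \<ge> 1"
    and "\<forall>j\<in>{1..r}. 0 < \<alpha> j \<and> \<alpha> j < 1"
    and "\<epsilon> > 0"
  shows "(\<lambda>n. prob_space.variance (walk_space r \<alpha>) (Rbar (b1, b2) r n))
           \<in> O(\<lambda>n. real n powr (-1/2 + \<epsilon>))"
proof -
  note b1 = assms(1) and b12 = assms(3) and r1 = assms(4) and ab = assms(5) and e = assms(6)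
  have g: "coprime b1 b2" using assms(2) by (simp add: coprime_iff_gcd_eq_1)
  obtain C where C0: "C > 0" and Cb: "\<And>k::nat. k \<ge> 1 \<Longrightarrow> (2::real) ^ card (prime_factors k) \<le> C * real k powr \<epsilon>"
    using card_pf_bound[OF e] by blast
  define A0 where "A0 = Min ((\<lambda>j. \<alpha> j * (1 - \<alpha> j)) ` {1..r})"
  have A0le: "\<forall>j\<in>{1..r}. A0 \<le> \<alpha> j * (1 - \<alpha> j)" unfolding A0_def by (auto intro: Min_le)
  have A0: "A0 > 0" unfolding A0_def using r1 ab by (subst Min_gr_iff) auto
  define K where "K = 64 * real r * (C + 1) / sqrt A0"
  have K0: "K \<ge> 0" unfolding K_def using C0 A0 by simp
  define I where "I = {1..r} \<times> (UNIV :: nat set)"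
  have WS: "walk_space r \<alpha> = PiM I (\<lambda>i. measure_pmf (pp \<alpha> i))"
    unfolding walk_space_def pp_def I_def by simp
  have bound: "\<bar>prob_space.variance (walk_space r \<alpha>) (Rbar (b1, b2) r n)\<bar> \<le> (1 + K) * real n powr (-1/2 + \<epsilon>)"
    if n1: "n \<ge> 1" for n
  proof -
    define J where "J = {1..r} \<times> {..<n}"
    define PP where "PP = Pi_pmf J False (pp \<alpha>)"
    define R where "R = Rbar (b1, b2) r n"
    have fJ: "finite J" unfolding J_def by simp
    have JI: "J \<subseteq> I" unfolding J_def I_def by auto
    have finPP: "finite (set_pmf PP)" unfolding PP_def by (rule fin_Pi[OF fJ])
    have depY: "Y_ind (b1,b2) r i f = Y_ind (b1,b2) r i g" if "\<forall>x\<in>J. f x = g x" "i \<le> n" for f g i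
      unfolding Y_prod using that unfolding J_def by (intro prod.cong refl arg_cong[where f="visk b1 b2 i"] Xc_dep) auto
    have depR: "R f = R g" if "\<forall>x\<in>J. f x = g x" for f g
      unfolding R_def Rbar_def using depY[OF that] by (intro arg_cong2[where f="(*)"] refl sum.cong) auto
    have E1: "integral\<^sup>L (walk_space r \<alpha>) R = measure_pmf.expectation PP R"
      unfolding WS PP_def by (rule bridge(2)[OF fJ JI depR])
    define c where "c = measure_pmf.expectation PP R"
    have E2: "integral\<^sup>L (walk_space r \<alpha>) (\<lambda>x. (R x - c)\<^sup>2) = measure_pmf.expectation PP (\<lambda>x. (R x - c)\<^sup>2)"
      unfolding WS PP_def by (rule bridge(2)[OF fJ JI]) (metis depR)
    define cov where "cov i k = measure_pmf.expectation PP (\<lambda>x. Y_ind (b1,b2) r i x * Y_ind (b1,b2) r k x)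
       - measure_pmf.expectation PP (Y_ind (b1,b2) r i) * measure_pmf.expectation PP (Y_ind (b1,b2) r k)" for i k
    have V: "prob_space.variance (walk_space r \<alpha>) R = (1 / real n)\<^sup>2 * (\<Sum>i=1..n. \<Sum>k=1..n. cov i k)"
    proof -
      have "prob_space.variance (walk_space r \<alpha>) R = measure_pmf.expectation PP (\<lambda>x. (R x - c)\<^sup>2)"
        using E1 E2 unfolding c_def by simp
      also have "\<dots> = (1 / real n)\<^sup>2 * (\<Sum>i=1..n. \<Sum>k=1..n. cov i k)"
        unfolding c_def cov_def R_def Rbar_def by (rule var_formula[OF finPP])
      finally show ?thesis .
    qed
    have Y01: "0 \<le> Y_ind (b1,b2) r i x \<and> Y_ind (b1,b2) r i x \<le> 1" for i x by (simp add: Y_ind_def)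
    have sym: "cov i k = cov k i" for i k unfolding cov_def by (simp add: mult.commute)
    have diag: "\<bar>cov i i\<bar> \<le> 1" for i
    proof -
      have a1: "0 \<le> measure_pmf.expectation PP (\<lambda>x. Y_ind (b1,b2) r i x * Y_ind (b1,b2) r i x) \<and>
                measure_pmf.expectation PP (\<lambda>x. Y_ind (b1,b2) r i x * Y_ind (b1,b2) r i x) \<le> 1"
        using Y01 by (intro exp01[OF finPP]) (simp add: mult_le_one)
      have a2: "0 \<le> measure_pmf.expectation PP (Y_ind (b1,b2) r i) \<and> measure_pmf.expectation PP (Y_ind (b1,b2) r i) \<le> 1"
        using Y01 by (intro exp01[OF finPP])
      then have "0 \<le> measure_pmf.expectation PP (Y_ind (b1,b2) r i) * measure_pmf.expectation PP (Y_ind (b1,b2) r i) \<and>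
                 measure_pmf.expectation PP (Y_ind (b1,b2) r i) * measure_pmf.expectation PP (Y_ind (b1,b2) r i) \<le> 1"
        by (simp add: mult_le_one)
      then show ?thesis using a1 unfolding cov_def by linarith
    qed
    define Q where "Q = real r * 2 * ((C + 1) * real n powr \<epsilon>) * (8 / sqrt A0)"
    have Q0: "Q \<ge> 0" unfolding Q_def using C0 A0 by simp
    have nE: "1 \<le> real n powr \<epsilon>" using n1 e by (intro ge_one_powr_ge_zero) auto
    have off: "\<bar>cov i k\<bar> \<le> Q / sqrt (real (k - i))" if ik: "1 \<le> i" "i < k" "k \<le> n" for i k
    proof -
      have k1: "k \<ge> 1" using ik by simp
      have "\<bar>cov i k\<bar> \<le> real r * (2 * ((2 ^ card (Sset b1 k) + 1) * (8 / sqrt (A0 * real (k - i)))))"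
        unfolding cov_def PP_def J_def by (rule cov_pair[OF b1 b12 g ab A0 A0le ik(2) ik(3)])
      also have "(2::real) ^ card (Sset b1 k) + 1 \<le> (C + 1) * real n powr \<epsilon>"
      proof -
        have "card (Sset b1 k) \<le> card (prime_factors k)" using Sset_sub[OF k1 b1] by (intro card_mono) auto
        then have "(2::real) ^ card (Sset b1 k) \<le> 2 ^ card (prime_factors k)" by (intro power_increasing) auto
        also have "\<dots> \<le> C * real k powr \<epsilon>" by (rule Cb[OF k1])
        also have "\<dots> \<le> C * real n powr \<epsilon>" using ik C0 e by (intro mult_left_mono powr_mono2) auto
        finally show ?thesis using nE by (simp add: algebra_simps)
      qed
      then have "(2 ^ card (Sset b1 k) + 1) * (8 / sqrt (A0 * real (k - i)))
               \<le> ((C + 1) * real n powr \<epsilon>) * (8 / sqrt (A0 * real (k - i)))"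
        by (rule mult_right_mono) (use A0 in simp)
      then have "real r * (2 * ((2 ^ card (Sset b1 k) + 1) * (8 / sqrt (A0 * real (k - i)))))
               \<le> real r * (2 * (((C + 1) * real n powr \<epsilon>) * (8 / sqrt (A0 * real (k - i)))))"
        by (intro mult_left_mono) auto
      also have "\<dots> = Q / sqrt (real (k - i))" unfolding Q_def by (simp add: real_sqrt_mult)
      finally show ?thesis .
    qed
    have S: "\<bar>\<Sum>i=1..n. \<Sum>k=1..n. cov i k\<bar> \<le> real n + 4 * Q * real n * sqrt (real n)"
      by (rule final_sum_bound[OF sym diag off Q0])
    have "\<bar>prob_space.variance (walk_space r \<alpha>) R\<bar> = (1 / real n)\<^sup>2 * \<bar>\<Sum>i=1..n. \<Sum>k=1..n. cov i k\<bar>"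
      unfolding V by (simp add: abs_mult)
    also have "\<dots> \<le> (1 / real n)\<^sup>2 * (real n + 4 * Q * real n * sqrt (real n))"
      using S by (intro mult_left_mono) auto
    also have "\<dots> = 1 / real n + 4 * Q * (sqrt (real n) / real n)"
      using n1 by (simp add: power2_eq_square field_simps)
    also have "\<dots> \<le> (1 + K) * real n powr (-1/2 + \<epsilon>)"
    proof -
      have n0: "real n > 0" using n1 by simp
      have "1 / real n = real n powr (-1)" using n0 by (simp add: powr_minus_divide)
      also have "\<dots> \<le> real n powr (-1/2 + \<epsilon>)" using n1 e by (intro powr_mono) auto
      finally have t1: "1 / real n \<le> real n powr (-1/2 + \<epsilon>)" .
      have sq: "sqrt (real n) / real n = real n powr (-1/2)"
      proof -
        have "real n powr (-1/2) = real n powr (1/2 - 1)" by simp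
        also have "\<dots> = real n powr (1/2) / real n powr 1" by (rule powr_diff)
        also have "\<dots> = sqrt (real n) / real n" using n0 by (simp add: powr_half_sqrt)
        finally show ?thesis by simp
      qed
      have "4 * Q * (sqrt (real n) / real n) = K * (real n powr \<epsilon> * real n powr (-1/2))"
        unfolding Q_def K_def sq by (simp add: algebra_simps add_divide_distrib)
      also have "real n powr \<epsilon> * real n powr (-1/2) = real n powr (-1/2 + \<epsilon>)"
        using n0 by (simp add: powr_add[symmetric] algebra_simps)
      finally have t2: "4 * Q * (sqrt (real n) / real n) = K * real n powr (-1/2 + \<epsilon>)" .
      show ?thesis using t1 t2 by (simp add: algebra_simps)
    qed
    finally show ?thesis unfolding R_def .
  qed
  show ?thesis
  proof (rule bigoI[where c = "1 + K"])
    show "\<forall>\<^sub>F n in at_top. norm (prob_space.variance (walk_space r \<alpha>) (Rbar (b1, b2) r n))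
              \<le> (1 + K) * norm (real n powr (-1/2 + \<epsilon>))"
      using eventually_ge_at_top[of "1::nat"] by eventually_elim (use bound in auto)
  qed
qed


end
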